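(* In the setting below, suppose the data are generated under $H_1$: labels in group $0$ are i.i.d. with weight vector $\Pi^{(0)}=(\pi^{(0)}_1,\dots,\pi^{(0)}_K)$ and labels in group $1$ are i.i.d. with weight vector $\Pi^{(1)}=(\pi^{(1)}_1,\dots,\pi^{(1)}_K)$, where $\Pi^{(0)}\ne\Pi^{(1)}$. Let $\Pi^*=\lambda_0\Pi^{(0)}+(1-\lambda_0)\Pi^{(1)}$ with entries $\pi_k^*$. Then, as $N_0,N_1\to\infty$ with $\lambda_0$ fixed, \[\frac{\operatorname{pr}(H_0\mid C^{(0)},C^{(1)})}{\operatorname{pr}(H_1\mid C^{(0)},C^{(1)})}\sim c\,N^{\frac{K-1}{2}}\prod_{k=1}^K\left(\frac{\pi_k^{(0)}}{\pi_k^*}\right)^{-N\lambda_0\pi_k^{(0)}}\left(\frac{\pi_k^{(1)}}{\pi_k^*}\right)^{-N(1-\lambda_0)\pi_k^{(1)}}\exp\{O_p(N^{1/2})\}.\]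
   Context: Setting: fix $K\ge2$, $\alpha\in(0,\infty)^K$, $P_0\in(0,1)$. Two groups of subjects of sizes $N_0,N_1$, $N=N_0+N_1$, $0<\lambda_0=N_0/N<1$ fixed. Each subject has a component label in $\{1,\dots,K\}$; $C^{(0)},C^{(1)}$ are the labels of the two groups, $n_k^{(i)}$ the number of subjects in group $i$ with label $k$, $n_k=n_k^{(0)}+n_k^{(1)}$. The Bayesian model: with prior probability $P_0$, $H_0$ holds (common weight vector $\Pi\sim\mathrm{Dir}(\alpha)$ for both groups); with probability $1-P_0$, $H_1$ holds (independent $\Pi^{(0)},\Pi^{(1)}\sim\mathrm{Dir}(\alpha)$), labels i.i.d. given the weights. The posterior odds are \[\frac{\operatorname{pr}(H_0\mid C^{(0)},C^{(1)})}{\operatorname{pr}(H_1\mid C^{(0)},C^{(1)})}=\frac{P_0\,\beta(\alpha)\,\beta(\vec n+\alpha)}{(1-P_0)\,\beta(\vec n^{(0)}+\alpha)\,\beta(\vec n^{(1)}+\alpha)},\quad \beta(a)=\frac{\prod_k\Gamma(a_k)}{\Gamma(\sum_k a_k)}.\] Define $p_{0k}=n_k^{(0)}/N_0$, $p_{1k}=n_k^{(1)}/N_1$, $p_k=n_k/N$, $r_{0k}=p_{0k}/p_k$, $r_{1k}=p_{1k}/p_k$, and \[c=\frac{P_0}{1-P_0}\left\{\frac{\lambda_0(1-\lambda_0)}{2\pi}\right\}^{\frac{K-1}{2}}\prod_{k=1}^K p_k^{\alpha_k+1/2}(r_{0k}r_{1k})^{1/2-\alpha_k}\] (here $\pi=3.14159\ldots$).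 $O_p(N^{1/2})$ denotes a random quantity bounded in probability after division by $N^{1/2}$. *)

theory Defs
  imports "HOL-Probability.Probability"
begin

text \<open>Components are labelled 1..K; vectors indexed by components are functions nat => real.\<close>

definition dir_beta :: "nat \<Rightarrow> (nat \<Rightarrow> real) \<Rightarrow> real" where
  "dir_beta K a = (\<Prod>k\<in>{1..K}. Gamma (a k)) / Gamma (\<Sum>k\<in>{1..K}. a k)"

definition cat_pmf :: "nat \<Rightarrow> (nat \<Rightarrow> real) \<Rightarrow> nat pmf" where
  "cat_pmf K w = embed_pmf (\<lambda>k. if k \<in> {1..K} then w k else 0)"

definition sample_H1 :: "nat \<Rightarrow> nat \<Rightarrow> nat \<Rightarrow> (nat \<Rightarrow> real) \<Rightarrow> (nat \<Rightarrow> real)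
    \<Rightarrow> ((nat \<Rightarrow> nat) \<times> (nat \<Rightarrow> nat)) pmf" where
  "sample_H1 K N0 N1 w0 w1 =
     pair_pmf (Pi_pmf {0..<N0} 0 (\<lambda>_. cat_pmf K w0)) (Pi_pmf {0..<N1} 0 (\<lambda>_. cat_pmf K w1))"

definition cnt :: "nat \<Rightarrow> (nat \<Rightarrow> nat) \<Rightarrow> nat \<Rightarrow> nat" where
  "cnt M C k = card {j \<in> {0..<M}. C j = k}"

definition post_odds :: "nat \<Rightarrow> (nat \<Rightarrow> real) \<Rightarrow> real \<Rightarrow> nat \<Rightarrow> nat
    \<Rightarrow> (nat \<Rightarrow> nat) \<Rightarrow> (nat \<Rightarrow> nat) \<Rightarrow> real" where
  "post_odds K \<alpha> P0 N0 N1 C0 C1 =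
     (P0 * dir_beta K \<alpha> * dir_beta K (\<lambda>k. real (cnt N0 C0 k + cnt N1 C1 k) + \<alpha> k))
     / ((1 - P0) * dir_beta K (\<lambda>k. real (cnt N0 C0 k) + \<alpha> k)
                 * dir_beta K (\<lambda>k. real (cnt N1 C1 k) + \<alpha> k))"

definition c_const :: "nat \<Rightarrow> (nat \<Rightarrow> real) \<Rightarrow> real \<Rightarrow> nat \<Rightarrow> nat
    \<Rightarrow> (nat \<Rightarrow> nat) \<Rightarrow> (nat \<Rightarrow> nat) \<Rightarrow> real" where
  "c_const K \<alpha> P0 N0 N1 C0 C1 =
     (let N = N0 + N1; lam0 = real N0 / real N;
          p0 = (\<lambda>k. real (cnt N0 C0 k) / real N0);
          p1 = (\<lambda>k. real (cnt N1 C1 k) / real N1);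
          p = (\<lambda>k. real (cnt N0 C0 k + cnt N1 C1 k) / real N);
          r0 = (\<lambda>k. p0 k / p k); r1 = (\<lambda>k. p1 k / p k)
      in P0 / (1 - P0) * (lam0 * (1 - lam0) / (2 * pi)) powr ((real K - 1) / 2)
         * (\<Prod>k\<in>{1..K}. p k powr (\<alpha> k + 1/2) * (r0 k * r1 k) powr (1/2 - \<alpha> k)))"

definition approx_odds :: "nat \<Rightarrow> (nat \<Rightarrow> real) \<Rightarrow> real \<Rightarrow> (nat \<Rightarrow> real) \<Rightarrow> (nat \<Rightarrow> real)
    \<Rightarrow> nat \<Rightarrow> nat \<Rightarrow> (nat \<Rightarrow> nat) \<Rightarrow> (nat \<Rightarrow> nat) \<Rightarrow> real" where
  "approx_odds K \<alpha> P0 w0 w1 N0 N1 C0 C1 =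
     (let N = real (N0 + N1); lam0 = real N0 / N;
          ws = (\<lambda>k. lam0 * w0 k + (1 - lam0) * w1 k)
      in c_const K \<alpha> P0 N0 N1 C0 C1 * N powr ((real K - 1) / 2)
         * (\<Prod>k\<in>{1..K}. (w0 k / ws k) powr (- N * lam0 * w0 k)
                          * (w1 k / ws k) powr (- N * (1 - lam0) * w1 k)))"

end

theory Submission
  imports Defs
begin


definition phi :: "real \<Rightarrow> real" where "phi t = t * ln t - t"

lemma ln_ge_1_minus_inv: "0 < x \<Longrightarrow> 1 - 1/x \<le> ln (x::real)"
proof -
  assume x: "0 < x"
  have "ln (1/x) \<le> 1/x - 1" using x by (intro ln_le_minus_one) simp
  thus ?thesis using x by (simp add: ln_div)
qed

lemma ln_fact_lower: "real n * ln (real n) - real n \<le> ln (fact n :: real)"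
proof (induction n)
  case 0 then show ?case by simp
next
  case (Suc n)
  have step: "real n * ln (real (Suc n)) \<le> real n * ln (real n) + 1"
  proof (cases "n = 0")
    case False
    hence np: "real n > 0" by simp
    have "real (Suc n) = real n * (1 + 1/real n)" using np by (simp add: field_simps)
    moreover have "ln (real n * (1 + 1/real n)) = ln (real n) + ln (1 + 1/real n)"
      using np by (intro ln_mult_pos) (auto intro: add_pos_pos)
    ultimately have "ln (real (Suc n)) = ln (real n) + ln (1 + 1/real n)" by simp
    moreover have "ln (1 + 1/real n) \<le> 1 / real n" by (rule ln_add_one_self_le_self) simp
    ultimately have "ln (real (Suc n)) \<le> ln (real n) + 1/real n" by simp
    hence "real n * ln (real (Suc n)) \<le> real n * (ln (real n) + 1/real n)"
      using np by (intro mult_left_mono) auto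
    thus ?thesis using np by (simp add: algebra_simps)
  qed simp
  have "ln (fact (Suc n) :: real) = ln (real (Suc n)) + ln (fact n)"
    by (simp add: ln_mult del: of_nat_Suc)
  moreover define s where "s = ln (real (Suc n))"
  ultimately have e: "ln (fact (Suc n) :: real) = s + ln (fact n)" by simp
  have st: "real n * s \<le> real n * ln (real n) + 1" using step unfolding s_def .
  have "real (Suc n) * s - real (Suc n) \<le> ln (fact (Suc n) :: real)"
    using e st Suc.IH by (simp add: algebra_simps)
  thus ?case unfolding s_def .
qed

lemma ln_fact_upper: "n \<ge> 1 \<Longrightarrow> ln (fact n :: real) \<le> real n * ln (real n) - real n + 1 + ln (real n)"
proof (induction n rule: dec_induct)
  case base then show ?case by simp
next
  case (step n)
  hence np: "real n > 0" by simp
  have "real (Suc n) = real n * ((real n + 1) / real n)" using np by (simp add: field_simps)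
  moreover have "ln (real n * ((real n + 1) / real n)) = ln (real n) + ln ((real n + 1) / real n)"
      using np by (intro ln_mult_pos) auto
  ultimately have "ln (real (Suc n)) = ln (real n) + ln ((real n + 1) / real n)" by simp
  moreover have "1 - 1 / ((real n + 1) / real n) \<le> ln ((real n + 1) / real n)"
    using np by (intro ln_ge_1_minus_inv) simp
  moreover have "1 - 1 / ((real n + 1) / real n) = 1 / (real n + 1)" using np by (simp add: field_simps)
  ultimately have "ln (real (Suc n)) \<ge> ln (real n) + 1 / (real n + 1)" by simp
  hence "(real n + 1) * ln (real (Suc n)) \<ge> (real n + 1) * (ln (real n) + 1 / (real n + 1))"
    using np by (intro mult_left_mono) auto
  hence key: "(real n + 1) * ln (real (Suc n)) \<ge> (real n + 1) * ln (real n) + 1"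
    using np by (simp add: algebra_simps)
  have "ln (fact (Suc n) :: real) = ln (real (Suc n)) + ln (fact n)"
    by (simp add: ln_mult del: of_nat_Suc)
  moreover define s where "s = ln (real (Suc n))"
  ultimately have e: "ln (fact (Suc n) :: real) = s + ln (fact n)" by simp
  have key': "(real n + 1) * s \<ge> (real n + 1) * ln (real n) + 1" using key unfolding s_def .
  have "ln (fact (Suc n) :: real) \<le> real (Suc n) * s - real (Suc n) + 1 + s"
    using e step.IH key' by (simp add: algebra_simps)
  thus ?case unfolding s_def .
qed

lemma phi_diff:
  assumes "1 \<le> j" "j \<le> x"
  shows "-(x - j) \<le> phi x - phi j" "phi x - phi j \<le> (x - j) * ln x"
proof -
  have jp: "j > 0" and xp: "x > 0" using assms by auto
  have e: "phi x - phi j = (x - j) * ln x + j * ln (x / j) - (x - j)"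
    using jp xp by (simp add: phi_def ln_div algebra_simps)
  have "ln (x/j) \<le> x/j - 1" using jp xp by (intro ln_le_minus_one) simp
  hence "j * ln (x/j) \<le> j * (x/j - 1)" using jp by (intro mult_left_mono) auto
  moreover have "j * (x/j - 1) = x - j" using jp by (simp add: field_simps)
  ultimately have u: "j * ln (x/j) \<le> x - j" by simp
  have "ln (x/j) \<ge> 0" using jp assms by (simp add: field_simps)
  hence l: "j * ln (x/j) \<ge> 0" using jp by simp
  have "ln x \<ge> 0" using assms by simp
  hence "(x - j) * ln x \<ge> 0" using assms by simp
  show "-(x - j) \<le> phi x - phi j" using e l \<open>(x - j) * ln x \<ge> 0\<close> by linarith
  show "phi x - phi j \<le> (x - j) * ln x" using e u by linarith
qed

lemma lnGamma_phi:
  assumes x: "x \<ge> 2"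
  shows "\<bar>ln (Gamma x) - phi x\<bar> \<le> 2 + 2 * ln x"
proof -
  define j where "j = nat \<lfloor>x\<rfloor>"
  have jx: "real j \<le> x" "x < real j + 1" using x unfolding j_def by linarith+
  have j2: "j \<ge> 2" using x unfolding j_def by linarith
  have jj: "real j \<ge> 2" using j2 by simp
  have g1: "Gamma (real j) \<le> Gamma x"
    using jx jj Gamma_real_strict_mono[of "real j" x] by (cases "real j = x") auto
  have g2: "Gamma x \<le> Gamma (real j + 1)"
    using jx jj Gamma_real_strict_mono[of x "real j + 1"] by auto
  have gf1: "Gamma (real j + 1) = fact j" using Gamma_fact[of j] by (simp add: add.commute)
  have gf0: "Gamma (real j) = fact (j - 1)"
    using Gamma_fact[of "j - 1"] j2 by (simp add: of_nat_diff)
  have fj: "(fact j :: real) = real j * fact (j - 1)"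
    using j2 by (metis Suc_diff_1 fact_Suc less_le_trans of_nat_Suc pos2)
  have lf: "ln (fact j :: real) = ln (real j) + ln (fact (j - 1))"
    using fj j2 by (simp add: ln_mult)
  have gxp: "Gamma x > 0" using x by simp
  have gxp: "Gamma x > 0" using x by simp
  have up: "ln (Gamma x) \<le> ln (fact j)"
    using g2 gf1 gxp by simp
  have lo: "ln (fact (j-1)) \<le> ln (Gamma x)"
    using g1 gf0 j2 gxp by (subst ln_le_cancel_iff) auto
  have A: "ln (fact j :: real) \<le> phi (real j) + 1 + ln (real j)"
    using ln_fact_upper[of j] j2 by (simp add: phi_def)
  have B: "phi (real j) \<le> ln (fact j)"
    using ln_fact_lower[of j] by (simp add: phi_def)
  have D1: "-(x - j) \<le> phi x - phi j" and D2: "phi x - phi j \<le> (x - j) * ln x"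
    using phi_diff[of "real j" x] jx jj by auto
  have lnj: "ln (real j) \<le> ln x" using jj jx by simp
  have lnx: "ln x \<ge> 0" using x by simp
  have "(x - j) * ln x \<le> 1 * ln x" using jx lnx by (intro mult_right_mono) auto
  show ?thesis using up lo lf A B D1 D2 lnj lnx \<open>(x - j) * ln x \<le> 1 * ln x\<close> jx by (simp add: abs_le_iff)
qed

lemma lnGamma_shift:
  assumes n: "n \<ge> 2" and a: "a \<ge> 0"
  shows "\<bar>ln (Gamma (n + a)) - phi n\<bar> \<le> (2 + a) * (1 + ln (n + a))"
proof -
  have g: "\<bar>ln (Gamma (n + a)) - phi (n + a)\<bar> \<le> 2 + 2 * ln (n + a)"
    using n a by (intro lnGamma_phi) simp
  have D1: "-a \<le> phi (n+a) - phi n" and D2: "phi (n+a) - phi n \<le> a * ln (n + a)"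
    using phi_diff[of n "n+a"] n a by auto
  have l: "ln (n + a) \<ge> 0" using n a by simp
  have "a * ln (n+a) \<le> a * (1 + ln (n+a))" using a by (simp add: mult_left_mono)
  have "(2 + a) * (1 + ln (n + a)) = 2 + 2 * ln (n+a) + a * (1 + ln (n+a))" by (simp add: algebra_simps)
  thus ?thesis using g D1 D2 l a \<open>a * ln (n+a) \<le> a * (1 + ln (n+a))\<close> by (simp add: abs_le_iff algebra_simps) (smt (verit) mult_nonneg_nonneg)
qed




lemma pmf_cat:
  assumes w: "\<And>k. k \<in> {1..K} \<Longrightarrow> w k > 0" and s: "(\<Sum>k\<in>{1..K}. w k) = 1"
  shows "pmf (cat_pmf K w) x = (if x \<in> {1..K} then w x else 0)"
proof -
  have nn: "\<And>x. 0 \<le> (if x \<in> {1..K} then w x else 0)" using w by (auto intro: less_imp_le)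
  have "(\<integral>\<^sup>+x. ennreal (if x \<in> {1..K} then w x else 0) \<partial>count_space UNIV)
        = (\<Sum>x\<in>{1..K}. ennreal (if x \<in> {1..K} then w x else 0))"
    by (intro nn_integral_count_space') auto
  also have "\<dots> = ennreal (\<Sum>x\<in>{1..K}. w x)"
    using w by (subst sum_ennreal) (auto intro: less_imp_le)
  finally have "(\<integral>\<^sup>+x. ennreal (if x \<in> {1..K} then w x else 0) \<partial>count_space UNIV) = 1"
    using s by simp
  thus ?thesis unfolding cat_pmf_def using nn by (subst pmf_embed_pmf) auto
qed

lemma set_cat:
  assumes w: "\<And>k. k \<in> {1..K} \<Longrightarrow> w k > 0" and s: "(\<Sum>k\<in>{1..K}. w k) = 1"
  shows "set_pmf (cat_pmf K w) \<subseteq> {1..K}"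
  using pmf_cat[OF w s] by (auto simp: set_pmf_eq split: if_splits)

lemma w_le1:
  fixes K :: nat
  assumes w: "\<And>k. k \<in> {1..K} \<Longrightarrow> w k > 0" and s: "(\<Sum>k\<in>{1..K}. w k) = (1::real)"
    and k: "k \<in> {1..K}"
  shows "w k \<le> 1"
proof -
  have "w k \<le> (\<Sum>k\<in>{1..K}. w k)" using k w by (intro member_le_sum) (auto intro: less_imp_le)
  thus ?thesis using s by simp
qed

lemma map_cat_bern:
  assumes w: "\<And>k. k \<in> {1..K} \<Longrightarrow> w k > 0" and s: "(\<Sum>k\<in>{1..K}. w k) = 1"
    and k: "k \<in> {1..K}"
  shows "map_pmf (\<lambda>c. c = k) (cat_pmf K w) = bernoulli_pmf (w k)"
proof (rule pmf_eqI)
  fix i :: bool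
  have w0: "0 \<le> w k" "w k \<le> 1" using w[OF k] w_le1[OF w s k] by auto
  have t: "measure_pmf.prob (cat_pmf K w) {k} = w k"
    using pmf_cat[OF w s, of k] k by (simp add: measure_pmf_single)
  show "pmf (map_pmf (\<lambda>c. c = k) (cat_pmf K w)) i = pmf (bernoulli_pmf (w k)) i"
  proof (cases i)
    case True
    have "(\<lambda>c. c = k) -` {True} = {k}" by auto
    thus ?thesis using True t w0 by (simp add: pmf_map)
  next
    case False
    have "(\<lambda>c. c = k) -` {False} = UNIV - {k}" by auto
    moreover have "measure_pmf.prob (cat_pmf K w) (UNIV - {k}) = 1 - w k"
      using measure_pmf.prob_compl[of "{k}" "cat_pmf K w"] t by simp
    ultimately show ?thesis using False w0 by (simp add: pmf_map)
  qed
qed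

lemma cnt_binom:
  assumes w: "\<And>k. k \<in> {1..K} \<Longrightarrow> w k > 0" and s: "(\<Sum>k\<in>{1..K}. w k) = 1"
    and k: "k \<in> {1..K}"
  shows "map_pmf (\<lambda>C. cnt M C k) (Pi_pmf {0..<M} 0 (\<lambda>_. cat_pmf K w)) = binomial_pmf M (w k)"
proof -
  have w0: "w k \<in> {0..1}" using w[OF k] w_le1[OF w s k] by auto
  have "binomial_pmf M (w k) = map_pmf (\<lambda>f. card {x \<in> {0..<M}. f x}) (Pi_pmf {0..<M} False (\<lambda>_. bernoulli_pmf (w k)))"
    using w0 by (intro binomial_pmf_altdef') auto
  also have "Pi_pmf {0..<M} False (\<lambda>_. bernoulli_pmf (w k)) = Pi_pmf {0..<M} False (\<lambda>_. map_pmf (\<lambda>c. c = k) (cat_pmf K w))"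
    using map_cat_bern[OF w s k] by simp
  also have "\<dots> = map_pmf ((\<circ>) (\<lambda>c. c = k)) (Pi_pmf {0..<M} 0 (\<lambda>_. cat_pmf K w))"
    using k by (intro Pi_pmf_map) auto
  finally show ?thesis by (simp add: pmf.map_comp o_def cnt_def)
qed

lemma dev_bound:
  assumes w: "\<And>k. k \<in> {1..K} \<Longrightarrow> w k > 0" and s: "(\<Sum>k\<in>{1..K}. w k) = 1"
    and k: "k \<in> {1..K}" and M: "M > 0" and T: "T \<ge> 0"
  shows "measure_pmf.prob (Pi_pmf {0..<M} 0 (\<lambda>_. cat_pmf K w))
           {C. T * sqrt (real M) \<le> \<bar>real (cnt M C k) - real M * w k\<bar>} \<le> 2 * exp (- 2 * T\<^sup>2)"
proof -
  have w0: "w k \<in> {0..1}" using w[OF k] w_le1[OF w s k] by auto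
  have "measure_pmf.prob (Pi_pmf {0..<M} 0 (\<lambda>_. cat_pmf K w))
           {C. T * sqrt (real M) \<le> \<bar>real (cnt M C k) - real M * w k\<bar>}
      = measure_pmf.prob (map_pmf (\<lambda>C. cnt M C k) (Pi_pmf {0..<M} 0 (\<lambda>_. cat_pmf K w)))
           {x. T * sqrt (real M) \<le> \<bar>real x - real M * w k\<bar>}"
    by (simp add: measure_map_pmf vimage_def)
  also have "\<dots> = measure_pmf.prob (binomial_pmf M (w k)) {x. T * sqrt (real M) \<le> \<bar>real x - real M * w k\<bar>}"
    using cnt_binom[OF w s k] by simp
  also have "\<dots> \<le> 2 * exp (- 2 * (T * sqrt (real M))\<^sup>2 / real M)"
    using w0 M T by (intro binomial_distribution.prob_abs_ge) (auto simp: binomial_distribution_def)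
  also have "2 * exp (- 2 * (T * sqrt (real M))\<^sup>2 / real M) = 2 * exp (- 2 * T\<^sup>2)" using M by (simp add: power_mult_distrib)
  finally show ?thesis .
qed

lemma pair_fst_prob: "measure_pmf.prob (pair_pmf A B) {p. P (fst p)} = measure_pmf.prob A {x. P x}"
proof -
  have "measure_pmf.prob (pair_pmf A B) {p. P (fst p)} = measure_pmf.prob (map_pmf fst (pair_pmf A B)) {x. P x}"
    by (simp add: measure_map_pmf vimage_def)
  thus ?thesis by (simp add: map_fst_pair_pmf)
qed

lemma pair_snd_prob: "measure_pmf.prob (pair_pmf A B) {p. P (snd p)} = measure_pmf.prob B {x. P x}"
proof -
  have "measure_pmf.prob (pair_pmf A B) {p. P (snd p)} = measure_pmf.prob (map_pmf snd (pair_pmf A B)) {x. P x}"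
    by (simp add: measure_map_pmf vimage_def)
  thus ?thesis by (simp add: map_snd_pair_pmf)
qed




definition hh :: "real \<Rightarrow> real" where "hh t = t * ln t"
definition LB :: "nat \<Rightarrow> (nat \<Rightarrow> real) \<Rightarrow> real" where
  "LB K v = (\<Sum>k\<in>{1..K}. ln (Gamma (v k))) - ln (Gamma (\<Sum>k\<in>{1..K}. v k))"

lemma sum_err:
  assumes "finite I" "\<And>i. i \<in> I \<Longrightarrow> \<bar>f i - g i\<bar> \<le> (e i :: real)"
  shows "\<bar>sum f I - sum g I\<bar> \<le> sum e I"
proof -
  have "\<bar>sum f I - sum g I\<bar> = \<bar>\<Sum>i\<in>I. f i - g i\<bar>" by (simp add: sum_subtractf)
  also have "\<dots> \<le> (\<Sum>i\<in>I. \<bar>f i - g i\<bar>)" by (rule sum_abs)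
  also have "\<dots> \<le> sum e I" using assms by (intro sum_mono) auto
  finally show ?thesis .
qed

lemma h_split:
  assumes "finite I" "t > 0" "\<And>i. i \<in> I \<Longrightarrow> z i > 0" "sum z I = t"
  shows "(\<Sum>i\<in>I. hh (z i)) = hh t + t * (\<Sum>i\<in>I. hh (z i / t))"
proof -
  have e: "hh (z i) = t * hh (z i / t) + z i * ln t" if "i \<in> I" for i
  proof -
    have zp: "z i > 0" using assms that by auto
    have l: "ln (z i / t) = ln (z i) - ln t" using zp assms(2) by (intro ln_divide_pos)
    have a: "t * hh (z i / t) = z i * ln (z i / t)" using assms(2) by (simp add: hh_def)
    have b: "hh (z i) = z i * ln t + z i * ln (z i / t)" unfolding hh_def l by (simp add: algebra_simps)
    show ?thesis using a b by linarith
  qed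
  have "(\<Sum>i\<in>I. hh (z i)) = (\<Sum>i\<in>I. t * hh (z i / t) + z i * ln t)" using e by (intro sum.cong) auto
  also have "\<dots> = t * (\<Sum>i\<in>I. hh (z i / t)) + (\<Sum>i\<in>I. z i) * ln t"
    by (simp add: sum.distrib sum_distrib_left sum_distrib_right)
  finally show ?thesis using assms(4) by (simp add: hh_def)
qed

lemma h_lip:
  assumes d: "0 < d" and u: "d \<le> u" "u \<le> 1" and v: "d \<le> v" "v \<le> 1"
  shows "\<bar>hh u - hh v\<bar> \<le> (1/d - ln d) * \<bar>u - v\<bar>"
proof -
  have up: "u > 0" "v > 0" using d u v by auto
  have e: "hh u - hh v = (u - v) * ln u + v * (ln u - ln v)" unfolding hh_def by (simp add: algebra_simps)
  have lu: "\<bar>ln u\<bar> \<le> - ln d" using up u d by (simp add: abs_if)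
  have t1: "\<bar>(u - v) * ln u\<bar> \<le> \<bar>u - v\<bar> * (- ln d)"
    unfolding abs_mult by (intro mult_left_mono lu) auto
  have a1: "ln u - ln v \<le> (u - v) / v"
  proof -
    have "ln (u / v) \<le> u / v - 1" using up by (intro ln_le_minus_one) simp
    thus ?thesis using up by (simp add: ln_div diff_divide_distrib)
  qed
  have a2: "ln v - ln u \<le> (v - u) / u"
  proof -
    have "ln (v / u) \<le> v / u - 1" using up by (intro ln_le_minus_one) simp
    thus ?thesis using up by (simp add: ln_div diff_divide_distrib)
  qed
  have b1: "v * (ln u - ln v) \<le> \<bar>u - v\<bar> / d"
  proof -
    have "v * (ln u - ln v) \<le> v * ((u - v) / v)" using a1 up by (intro mult_left_mono) auto
    also have "\<dots> = u - v" using up by simp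
    also have "\<dots> \<le> \<bar>u - v\<bar> / d"
    proof (cases "u \<ge> v")
      case True
      have "d * \<bar>u - v\<bar> \<le> 1 * \<bar>u - v\<bar>" using d u v by (intro mult_right_mono) auto
      hence "\<bar>u - v\<bar> * 1 \<le> \<bar>u - v\<bar> / d" using d by (simp add: field_simps)
      thus ?thesis by simp
    next
      case False
      have "\<bar>u - v\<bar> / d \<ge> 0" using d by simp
      thus ?thesis using False by linarith
    qed
    finally show ?thesis .
  qed
  have b2: "v * (ln v - ln u) \<le> \<bar>u - v\<bar> / d"
  proof -
    have "v * (ln v - ln u) \<le> v * ((v - u) / u)" using a2 up by (intro mult_left_mono) auto
    also have "\<dots> \<le> 1 * (\<bar>u - v\<bar> / d)"
    proof (cases "v \<ge> u")
      case True
      have "(v - u) / u \<le> \<bar>u - v\<bar> / d" using True d u by (intro frac_le) auto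
      moreover have "(v - u) / u \<ge> 0" using True up by simp
      ultimately show ?thesis using v by (intro mult_mono) auto
    next
      case False
      hence "v * ((v - u) / u) \<le> 0" using up by (intro mult_nonneg_nonpos) (auto simp: divide_nonpos_pos)
      moreover have "\<bar>u - v\<bar> / d \<ge> 0" using d by simp
      ultimately show ?thesis by linarith
    qed
    finally show ?thesis by simp
  qed
  have "\<bar>v * (ln u - ln v)\<bar> \<le> \<bar>u - v\<bar> / d" using b1 b2 by (simp add: abs_le_iff algebra_simps)
  hence "\<bar>hh u - hh v\<bar> \<le> \<bar>u - v\<bar> * (- ln d) + \<bar>u - v\<bar> / d" using e t1 by linarith
  thus ?thesis by (simp add: algebra_simps)
qed

lemma ln_le_2sqrt: "x > 0 \<Longrightarrow> ln x \<le> 2 * sqrt (x::real)"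
proof -
  assume x: "x > 0"
  have "ln (sqrt x) \<le> sqrt x - 1" using x by (intro ln_le_minus_one) simp
  moreover have "ln (sqrt x) = ln x / 2" using x by (simp add: ln_sqrt)
  ultimately show ?thesis by simp
qed

lemma sqrt_add_le: "0 \<le> a \<Longrightarrow> 0 \<le> b \<Longrightarrow> sqrt (a + b) \<le> sqrt a + sqrt (b::real)"
  by (rule real_le_lsqrt) (auto simp: power2_eq_square algebra_simps)

lemma dir_beta_pos: "K \<ge> 1 \<Longrightarrow> (\<And>k. k \<in> {1..K} \<Longrightarrow> a k > 0) \<Longrightarrow> dir_beta K a > 0"
  unfolding dir_beta_def
  by (intro divide_pos_pos prod_pos Gamma_real_pos sum_pos) auto

lemma ln_dir_beta: "K \<ge> 1 \<Longrightarrow> (\<And>k. k \<in> {1..K} \<Longrightarrow> a k > 0) \<Longrightarrow> ln (dir_beta K a) = LB K a"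
proof -
  assume K: "K \<ge> 1" and a: "\<And>k. k \<in> {1..K} \<Longrightarrow> a k > 0"
  have s: "(\<Sum>k\<in>{1..K}. a k) > 0" using K a by (intro sum_pos) auto
  have p: "(\<Prod>k\<in>{1..K}. Gamma (a k)) > 0" using a by (intro prod_pos Gamma_real_pos) auto
  have "ln (dir_beta K a) = ln (\<Prod>k\<in>{1..K}. Gamma (a k)) - ln (Gamma (\<Sum>k\<in>{1..K}. a k))"
    unfolding dir_beta_def using s p by (intro ln_divide_pos) auto
  also have "ln (\<Prod>k\<in>{1..K}. Gamma (a k)) = (\<Sum>k\<in>{1..K}. ln (Gamma (a k)))"
    using a by (intro ln_prod) (simp, metis Gamma_real_pos less_irrefl)
  finally show ?thesis unfolding LB_def .
qed




lemma ln_post: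
  fixes K :: nat
  assumes K: "K \<ge> 1" and a: "\<And>k. k \<in> {1..K} \<Longrightarrow> \<alpha> k > 0" and P0: "0 < P0" "P0 < 1"
  shows "post_odds K \<alpha> P0 N0 N1 C0 C1 > 0"
    "ln (post_odds K \<alpha> P0 N0 N1 C0 C1) = ln (P0 / (1 - P0)) + LB K \<alpha>
       + LB K (\<lambda>k. real (cnt N0 C0 k) + real (cnt N1 C1 k) + \<alpha> k)
       - LB K (\<lambda>k. real (cnt N0 C0 k) + \<alpha> k) - LB K (\<lambda>k. real (cnt N1 C1 k) + \<alpha> k)"
proof -
  define d0 where "d0 = dir_beta K \<alpha>"
  define d3 where "d3 = dir_beta K (\<lambda>k. real (cnt N0 C0 k) + real (cnt N1 C1 k) + \<alpha> k)"
  define d1 where "d1 = dir_beta K (\<lambda>k. real (cnt N0 C0 k) + \<alpha> k)"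
  define d2 where "d2 = dir_beta K (\<lambda>k. real (cnt N1 C1 k) + \<alpha> k)"
  have pos: "d0 > 0" "d1 > 0" "d2 > 0" "d3 > 0" unfolding d0_def d1_def d2_def d3_def
    using K a by (auto intro!: dir_beta_pos add_nonneg_pos)
  have ln: "ln d0 = LB K \<alpha>" "ln d1 = LB K (\<lambda>k. real (cnt N0 C0 k) + \<alpha> k)"
    "ln d2 = LB K (\<lambda>k. real (cnt N1 C1 k) + \<alpha> k)"
    "ln d3 = LB K (\<lambda>k. real (cnt N0 C0 k) + real (cnt N1 C1 k) + \<alpha> k)"
    unfolding d0_def d1_def d2_def d3_def
    using K a by (auto intro!: ln_dir_beta add_nonneg_pos)
  have e: "post_odds K \<alpha> P0 N0 N1 C0 C1 = (P0 * d0 * d3) / ((1 - P0) * d1 * d2)"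
    unfolding post_odds_def d0_def d1_def d2_def d3_def by simp
  show "post_odds K \<alpha> P0 N0 N1 C0 C1 > 0" unfolding e using pos P0 by simp
  have "ln ((P0 * d0 * d3) / ((1 - P0) * d1 * d2)) = ln P0 + ln d0 + ln d3 - (ln (1 - P0) + ln d1 + ln d2)"
    using pos P0 by (simp add: ln_mult_pos ln_divide_pos)
  moreover have "ln (P0 / (1 - P0)) = ln P0 - ln (1 - P0)" using P0 by (simp add: ln_divide_pos)
  ultimately show "ln (post_odds K \<alpha> P0 N0 N1 C0 C1) = ln (P0 / (1 - P0)) + LB K \<alpha>
       + LB K (\<lambda>k. real (cnt N0 C0 k) + real (cnt N1 C1 k) + \<alpha> k)
       - LB K (\<lambda>k. real (cnt N0 C0 k) + \<alpha> k) - LB K (\<lambda>k. real (cnt N1 C1 k) + \<alpha> k)"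
    unfolding e ln by simp
qed

lemma approx_unfold:
  fixes K N0 N1 :: nat and C0 C1 :: "nat \<Rightarrow> nat" and lam :: real
  assumes N: "N0 + N1 > 0" and ratio: "real N0 = lam * real (N0 + N1)"
  defines "Nr \<equiv> real N0 + real N1"
  defines "x \<equiv> \<lambda>k. real (cnt N0 C0 k)" and "y \<equiv> \<lambda>k. real (cnt N1 C1 k)"
  shows "approx_odds K \<alpha> P0 w0 w1 N0 N1 C0 C1 =
    (P0 / (1 - P0) * (lam * (1 - lam) / (2 * pi)) powr ((real K - 1) / 2)
         * (\<Prod>k\<in>{1..K}. ((x k + y k) / Nr) powr (\<alpha> k + 1/2)
              * ((x k / real N0) / ((x k + y k) / Nr) * ((y k / real N1) / ((x k + y k) / Nr))) powr (1/2 - \<alpha> k)))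
    * Nr powr ((real K - 1) / 2)
    * (\<Prod>k\<in>{1..K}. (w0 k / (lam * w0 k + (1 - lam) * w1 k)) powr (- Nr * lam * w0 k)
                   * (w1 k / (lam * w0 k + (1 - lam) * w1 k)) powr (- Nr * (1 - lam) * w1 k))"
proof -
  have np: "real (N0 + N1) > 0" using N by (simp only: of_nat_0_less_iff)
  have l1: "real N0 / real (N0 + N1) = lam" using ratio np by (simp add: divide_eq_eq del: of_nat_add)
  have l2: "real N0 / (real N0 + real N1) = lam" using l1 by simp
  show ?thesis unfolding approx_odds_def c_const_def Let_def Nr_def x_def y_def
    by (simp only: l1 l2 of_nat_add)
qed




lemma ln_approx_gen:
  fixes K :: nat and p r0 r1 w0 w1 ws \<alpha> E0 E1 :: "nat \<Rightarrow> real" and P0 Q Nr e :: real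
  assumes P0: "0 < P0" "P0 < 1" and Q: "Q > 0" and Nr: "Nr > 0"
    and pos: "\<And>k. k \<in> {1..K} \<Longrightarrow> p k > 0 \<and> r0 k > 0 \<and> r1 k > 0 \<and> w0 k > 0 \<and> w1 k > 0 \<and> ws k > 0"
  defines "V \<equiv> P0 / (1 - P0) * Q powr e
         * (\<Prod>k\<in>{1..K}. p k powr (\<alpha> k + 1/2) * (r0 k * r1 k) powr (1/2 - \<alpha> k))
         * Nr powr e
         * (\<Prod>k\<in>{1..K}. (w0 k / ws k) powr (E0 k) * (w1 k / ws k) powr (E1 k))"
  shows "V > 0" "ln V = ln (P0 / (1 - P0)) + e * ln Q
      + (\<Sum>k\<in>{1..K}. (\<alpha> k + 1/2) * ln (p k) + (1/2 - \<alpha> k) * (ln (r0 k) + ln (r1 k)))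
      + e * ln Nr + (\<Sum>k\<in>{1..K}. E0 k * ln (w0 k / ws k) + E1 k * ln (w1 k / ws k))"
proof -
  define A1 where "A1 = (\<Prod>k\<in>{1..K}. p k powr (\<alpha> k + 1/2) * (r0 k * r1 k) powr (1/2 - \<alpha> k))"
  define A2 where "A2 = (\<Prod>k\<in>{1..K}. (w0 k / ws k) powr (E0 k) * (w1 k / ws k) powr (E1 k))"
  have f1: "p k powr (\<alpha> k + 1/2) * (r0 k * r1 k) powr (1/2 - \<alpha> k) > 0" if "k \<in> {1..K}" for k
    using pos[OF that] by (intro mult_pos_pos) auto
  have f2: "(w0 k / ws k) powr (E0 k) * (w1 k / ws k) powr (E1 k) > 0" if "k \<in> {1..K}" for k
    using pos[OF that] by (intro mult_pos_pos) auto
  have A1p: "A1 > 0" unfolding A1_def using f1 by (intro prod_pos) auto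
  have A2p: "A2 > 0" unfolding A2_def using f2 by (intro prod_pos) auto
  have c0: "P0 / (1 - P0) > 0" using P0 by simp
  have V: "V = P0 / (1 - P0) * Q powr e * A1 * Nr powr e * A2" unfolding V_def A1_def A2_def ..
  show "V > 0" unfolding V using A1p A2p c0 Q Nr by (intro mult_pos_pos) auto
  have lA1: "ln A1 = (\<Sum>k\<in>{1..K}. (\<alpha> k + 1/2) * ln (p k) + (1/2 - \<alpha> k) * (ln (r0 k) + ln (r1 k)))"
  proof -
    have "ln A1 = (\<Sum>k\<in>{1..K}. ln (p k powr (\<alpha> k + 1/2) * (r0 k * r1 k) powr (1/2 - \<alpha> k)))"
      unfolding A1_def by (rule ln_prod) (simp, metis f1 less_irrefl)
    also have "\<dots> = (\<Sum>k\<in>{1..K}. (\<alpha> k + 1/2) * ln (p k) + (1/2 - \<alpha> k) * (ln (r0 k) + ln (r1 k)))"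
    proof (intro sum.cong refl)
      fix k assume k: "k \<in> {1..K}"
      have a: "p k > 0" "r0 k > 0" "r1 k > 0" using pos[OF k] by auto
      have "ln (p k powr (\<alpha> k + 1/2) * (r0 k * r1 k) powr (1/2 - \<alpha> k))
          = ln (p k powr (\<alpha> k + 1/2)) + ln ((r0 k * r1 k) powr (1/2 - \<alpha> k))"
        using a by (intro ln_mult_pos) auto
      also have "\<dots> = (\<alpha> k + 1/2) * ln (p k) + (1/2 - \<alpha> k) * ln (r0 k * r1 k)" by simp
      also have "ln (r0 k * r1 k) = ln (r0 k) + ln (r1 k)" using a by (intro ln_mult_pos)
      finally show "ln (p k powr (\<alpha> k + 1/2) * (r0 k * r1 k) powr (1/2 - \<alpha> k)) =
        (\<alpha> k + 1/2) * ln (p k) + (1/2 - \<alpha> k) * (ln (r0 k) + ln (r1 k))" .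
    qed
    finally show ?thesis .
  qed
  have lA2: "ln A2 = (\<Sum>k\<in>{1..K}. E0 k * ln (w0 k / ws k) + E1 k * ln (w1 k / ws k))"
  proof -
    have "ln A2 = (\<Sum>k\<in>{1..K}. ln ((w0 k / ws k) powr (E0 k) * (w1 k / ws k) powr (E1 k)))"
      unfolding A2_def by (rule ln_prod) (simp, metis f2 less_irrefl)
    also have "\<dots> = (\<Sum>k\<in>{1..K}. E0 k * ln (w0 k / ws k) + E1 k * ln (w1 k / ws k))"
    proof (intro sum.cong refl)
      fix k assume k: "k \<in> {1..K}"
      have a: "w0 k / ws k > 0" "w1 k / ws k > 0" using pos[OF k] by auto
      have "ln ((w0 k / ws k) powr (E0 k) * (w1 k / ws k) powr (E1 k))
          = ln ((w0 k / ws k) powr (E0 k)) + ln ((w1 k / ws k) powr (E1 k))"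
        using a by (intro ln_mult_pos) auto
      thus "ln ((w0 k / ws k) powr (E0 k) * (w1 k / ws k) powr (E1 k)) =
        E0 k * ln (w0 k / ws k) + E1 k * ln (w1 k / ws k)" by simp
    qed
    finally show ?thesis .
  qed
  show "ln V = ln (P0 / (1 - P0)) + e * ln Q
      + (\<Sum>k\<in>{1..K}. (\<alpha> k + 1/2) * ln (p k) + (1/2 - \<alpha> k) * (ln (r0 k) + ln (r1 k)))
      + e * ln Nr + (\<Sum>k\<in>{1..K}. E0 k * ln (w0 k / ws k) + E1 k * ln (w1 k / ws k))"
  proof -
    define c where "c = P0 / (1 - P0)"
    define q where "q = Q powr e"
    define n where "n = Nr powr e"
    have qp: "q > 0" "n > 0" "c > 0" unfolding q_def n_def c_def using Q Nr c0 by auto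
    have "ln (c * q * A1 * n * A2) = ln c + ln q + ln A1 + ln n + ln A2"
      using qp A1p A2p by (simp add: ln_mult_pos)
    moreover have "ln q = e * ln Q" "ln n = e * ln Nr" unfolding q_def n_def by simp_all
    ultimately show ?thesis unfolding V lA1[symmetric] lA2[symmetric] c_def[symmetric] q_def[symmetric] n_def[symmetric]
      by simp
  qed
qed




lemma tri3: "\<bar>u + v - w\<bar> \<le> \<bar>u\<bar> + \<bar>v\<bar> + \<bar>w::real\<bar>"
  unfolding abs_le_iff using abs_ge_self[of u] abs_ge_minus_self[of u] abs_ge_self[of v] abs_ge_minus_self[of v]
    abs_ge_self[of w] abs_ge_minus_self[of w] by linarith

lemma det:
  fixes K :: nat and \<alpha> w0 w1 :: "nat \<Rightarrow> real" and P0 lam T :: real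
  assumes K: "K \<ge> 2"
    and alpha_pos: "\<And>k. k \<in> {1..K} \<Longrightarrow> \<alpha> k > 0"
    and P0: "0 < P0" "P0 < 1"
    and lam: "0 < lam" "lam < 1"
    and w0_pos: "\<And>k. k \<in> {1..K} \<Longrightarrow> w0 k > 0"
    and w1_pos: "\<And>k. k \<in> {1..K} \<Longrightarrow> w1 k > 0"
    and w0_sum: "(\<Sum>k\<in>{1..K}. w0 k) = 1"
    and w1_sum: "(\<Sum>k\<in>{1..K}. w1 k) = 1"
    and T: "T \<ge> 0"
  shows "\<exists>M X. \<forall>N0 N1 C0 C1. real N0 \<ge> X \<longrightarrow> real N1 \<ge> X \<longrightarrow> real N0 = lam * real (N0 + N1)
      \<longrightarrow> (\<Sum>k\<in>{1..K}. cnt N0 C0 k) = N0 \<longrightarrow> (\<Sum>k\<in>{1..K}. cnt N1 C1 k) = N1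
      \<longrightarrow> (\<forall>k\<in>{1..K}. \<bar>real (cnt N0 C0 k) - real N0 * w0 k\<bar> \<le> T * sqrt (real N0)
              \<and> \<bar>real (cnt N1 C1 k) - real N1 * w1 k\<bar> \<le> T * sqrt (real N1))
      \<longrightarrow> approx_odds K \<alpha> P0 w0 w1 N0 N1 C0 C1 > 0 \<and>
          \<bar>ln (post_odds K \<alpha> P0 N0 N1 C0 C1 / approx_odds K \<alpha> P0 w0 w1 N0 N1 C0 C1)\<bar>
            \<le> M * sqrt (real (N0 + N1))"
proof -
  have K1: "K \<ge> 1" and one: "1 \<in> {1..K}" using K by auto
  define \<delta> where "\<delta> = Min ((\<lambda>k. min (w0 k) (w1 k)) ` {1..K}) / 2"
  have fin: "finite ((\<lambda>k. min (w0 k) (w1 k)) ` {1..K})" "(\<lambda>k. min (w0 k) (w1 k)) ` {1..K} \<noteq> {}"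
    using K by auto
  have "0 < Min ((\<lambda>k. min (w0 k) (w1 k)) ` {1..K})"
    using w0_pos w1_pos by (subst Min_gr_iff[OF fin]) auto
  hence dpos: "\<delta> > 0" unfolding \<delta>_def by simp
  have wd: "2 * \<delta> \<le> w0 k" "2 * \<delta> \<le> w1 k" if "k \<in> {1..K}" for k
  proof -
    have "Min ((\<lambda>k. min (w0 k) (w1 k)) ` {1..K}) \<le> min (w0 k) (w1 k)"
      using fin that by (intro Min_le) auto
    thus "2 * \<delta> \<le> w0 k" "2 * \<delta> \<le> w1 k" unfolding \<delta>_def by auto
  qed
  have w0le: "w0 k \<le> 1" and w1le: "w1 k \<le> 1" if "k \<in> {1..K}" for k
    using w_le1[OF w0_pos w0_sum that] w_le1[OF w1_pos w1_sum that] by auto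
  have dle: "\<delta> \<le> 1/2" using wd(1)[OF one] w0le[OF one] by simp
  have lnd: "ln \<delta> < 0" using dpos dle by simp
  define A where "A = (\<Sum>k\<in>{1..K}. \<alpha> k)"
  have A0: "A \<ge> 0" unfolding A_def using alpha_pos by (intro sum_nonneg) (auto intro: less_imp_le)
  have aleA: "\<alpha> k \<le> A" if "k \<in> {1..K}" for k
    unfolding A_def using that alpha_pos by (intro member_le_sum) (auto intro: less_imp_le)
  define Lc where "Lc = 1/\<delta> - ln \<delta>"
  have "1/\<delta> > 0" using dpos by simp
  hence Lc0: "Lc \<ge> 0" unfolding Lc_def using lnd by linarith
  define X where "X = (T/\<delta>)\<^sup>2 + 2/\<delta> + 1"
  define e where "e = (real K - 1) / 2"
  define Qc where "Qc = lam * (1 - lam) / (2 * pi)"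
  define CB where "CB = \<bar>LB K \<alpha>\<bar>"
  define B1 where "B1 = 6 * real K + 6 * A + 6"
  define Cc1 where "Cc1 = \<bar>e * ln Qc\<bar>"
  define Cc2 where "Cc2 = 3 * (- ln \<delta>) * (A + real K / 2)"
  define B2 where "B2 = 4 * real K * Lc * T"
  define M where "M = CB + Cc1 + Cc2 + (B1 + real K) * (3 + 2 * sqrt A) + B2"
  have "\<forall>N0 N1 C0 C1. real N0 \<ge> X \<longrightarrow> real N1 \<ge> X \<longrightarrow> real N0 = lam * real (N0 + N1)
      \<longrightarrow> (\<Sum>k\<in>{1..K}. cnt N0 C0 k) = N0 \<longrightarrow> (\<Sum>k\<in>{1..K}. cnt N1 C1 k) = N1
      \<longrightarrow> (\<forall>k\<in>{1..K}. \<bar>real (cnt N0 C0 k) - real N0 * w0 k\<bar> \<le> T * sqrt (real N0)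
              \<and> \<bar>real (cnt N1 C1 k) - real N1 * w1 k\<bar> \<le> T * sqrt (real N1))
      \<longrightarrow> approx_odds K \<alpha> P0 w0 w1 N0 N1 C0 C1 > 0 \<and>
          \<bar>ln (post_odds K \<alpha> P0 N0 N1 C0 C1 / approx_odds K \<alpha> P0 w0 w1 N0 N1 C0 C1)\<bar>
            \<le> M * sqrt (real (N0 + N1))"
  proof (intro allI impI)
    fix N0 N1 :: nat and C0 C1 :: "nat \<Rightarrow> nat"
    assume X0: "real N0 \<ge> X" and X1: "real N1 \<ge> X" and ratio: "real N0 = lam * real (N0 + N1)"
      and s0: "(\<Sum>k\<in>{1..K}. cnt N0 C0 k) = N0" and s1: "(\<Sum>k\<in>{1..K}. cnt N1 C1 k) = N1"
      and dev: "\<forall>k\<in>{1..K}. \<bar>real (cnt N0 C0 k) - real N0 * w0 k\<bar> \<le> T * sqrt (real N0)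
              \<and> \<bar>real (cnt N1 C1 k) - real N1 * w1 k\<bar> \<le> T * sqrt (real N1)"
    define x where "x = (\<lambda>k. real (cnt N0 C0 k))"
    define y where "y = (\<lambda>k. real (cnt N1 C1 k))"
    define n0 where "n0 = real N0"
    define n1 where "n1 = real N1"
    define Nr where "Nr = n0 + n1"
    show "approx_odds K \<alpha> P0 w0 w1 N0 N1 C0 C1 > 0 \<and>
          \<bar>ln (post_odds K \<alpha> P0 N0 N1 C0 C1 / approx_odds K \<alpha> P0 w0 w1 N0 N1 C0 C1)\<bar>
            \<le> M * sqrt (real (N0 + N1))"
    proof -
    have n0X: "n0 \<ge> X" and n1X: "n1 \<ge> X" using X0 X1 unfolding n0_def n1_def .
    have X2: "X \<ge> (T/\<delta>)\<^sup>2" "X \<ge> 2/\<delta>" "X \<ge> 1" unfolding X_def using dpos by auto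
    have n0p: "n0 > 0" and n1p: "n1 > 0" using n0X n1X X2 by auto
    have Nrp: "Nr > 0" unfolding Nr_def using n0p n1p by simp
    have NrN: "real (N0 + N1) = Nr" unfolding Nr_def n0_def n1_def by simp
    have rat: "n0 = lam * Nr" using ratio unfolding NrN n0_def .
    have rat1: "n1 = (1 - lam) * Nr" using rat unfolding Nr_def by (simp add: algebra_simps)
    have Nr1: "Nr \<ge> 1" unfolding Nr_def using n0X n1X X2 by simp
    have sqNr: "sqrt Nr \<ge> 1" using Nr1 by simp
    have Tsq: "T * sqrt n \<le> \<delta> * n" if "n \<ge> X" for n
    proof -
      have "sqrt ((T/\<delta>)\<^sup>2) \<le> sqrt n" using that X2 by (intro real_sqrt_le_mono) linarith
      hence "T / \<delta> \<le> sqrt n" using T dpos by simp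
      hence "T \<le> \<delta> * sqrt n" using dpos by (simp add: field_simps)
      moreover have "n \<ge> 0" using that X2 by linarith
      ultimately have "T * sqrt n \<le> \<delta> * sqrt n * sqrt n" by (intro mult_right_mono) auto
      also have "\<delta> * sqrt n * sqrt n = \<delta> * n" using that X2 by (simp add: mult.assoc)
      finally show ?thesis .
    qed
    have dn2: "\<delta> * n \<ge> 2" if "n \<ge> X" for n
    proof -
      have "n \<ge> 2 / \<delta>" using that X2 by linarith
      thus ?thesis using dpos by (simp add: field_simps)
    qed
    have sx: "(\<Sum>k\<in>{1..K}. x k) = n0" unfolding x_def n0_def using s0 by (simp flip: of_nat_sum)
    have sy: "(\<Sum>k\<in>{1..K}. y k) = n1" unfolding y_def n1_def using s1 by (simp flip: of_nat_sum)
    have x0: "x k \<ge> 0" "y k \<ge> 0" for k unfolding x_def y_def by auto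
    have xle: "x k \<le> n0" "y k \<le> n1" if "k \<in> {1..K}" for k
    proof -
      show "x k \<le> n0" unfolding sx[symmetric] using that x0 by (intro member_le_sum) auto
      show "y k \<le> n1" unfolding sy[symmetric] using that x0 by (intro member_le_sum) auto
    qed
    have devx: "\<bar>x k - n0 * w0 k\<bar> \<le> T * sqrt n0" "\<bar>y k - n1 * w1 k\<bar> \<le> T * sqrt n1"
      if "k \<in> {1..K}" for k using dev that unfolding x_def y_def n0_def n1_def by auto
    have xlow: "x k \<ge> \<delta> * n0" "y k \<ge> \<delta> * n1" if "k \<in> {1..K}" for k
    proof -
      have "n0 * w0 k \<ge> n0 * (2 * \<delta>)" using wd[OF that] n0p by (intro mult_left_mono) auto
      moreover have "n0 * (2 * \<delta>) = 2 * (\<delta> * n0)" by simp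
      ultimately have "n0 * w0 k \<ge> 2 * (\<delta> * n0)" by linarith
      thus "x k \<ge> \<delta> * n0" using devx(1)[OF that] Tsq[OF n0X] by (simp add: abs_le_iff)
      have "n1 * w1 k \<ge> n1 * (2 * \<delta>)" using wd[OF that] n1p by (intro mult_left_mono) auto
      moreover have "n1 * (2 * \<delta>) = 2 * (\<delta> * n1)" by simp
      ultimately have "n1 * w1 k \<ge> 2 * (\<delta> * n1)" by linarith
      thus "y k \<ge> \<delta> * n1" using devx(2)[OF that] Tsq[OF n1X] by (simp add: abs_le_iff)
    qed
    have x2: "x k \<ge> 2" "y k \<ge> 2" if "k \<in> {1..K}" for k
      using xlow[OF that] dn2[OF n0X] dn2[OF n1X] by auto
    define p0 where "p0 = (\<lambda>k. x k / n0)"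
    define p1 where "p1 = (\<lambda>k. y k / n1)"
    define p where "p = (\<lambda>k. (x k + y k) / Nr)"
    have p0r: "\<delta> \<le> p0 k \<and> p0 k \<le> 1" "\<delta> \<le> p1 k \<and> p1 k \<le> 1" if "k \<in> {1..K}" for k
      unfolding p0_def p1_def using xlow[OF that] xle[OF that] n0p n1p by (auto simp: field_simps)
    have pmix: "p k = lam * p0 k + (1 - lam) * p1 k" for k
      unfolding p_def p0_def p1_def rat rat1 using lam Nrp by (simp add: field_simps)
    have pr: "\<delta> \<le> p k \<and> p k \<le> 1" if "k \<in> {1..K}" for k
    proof -
      have "lam * \<delta> + (1 - lam) * \<delta> \<le> lam * p0 k + (1 - lam) * p1 k"
        using p0r[OF that] lam by (intro add_mono mult_left_mono) auto
      moreover have "lam * p0 k + (1 - lam) * p1 k \<le> lam * 1 + (1 - lam) * 1"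
        using p0r[OF that] lam by (intro add_mono mult_left_mono) auto
      ultimately show ?thesis unfolding pmix by (simp add: algebra_simps)
    qed
    have Nr2: "Nr \<ge> 2" using x2(1)[OF one] xle(1)[OF one] n1p unfolding Nr_def by linarith
    have n02: "n0 \<ge> 2" using x2(1)[OF one] xle(1)[OF one] by linarith
    have n12: "n1 \<ge> 2" using x2(2)[OF one] xle(2)[OF one] by linarith
    define ws where "ws = (\<lambda>k. lam * w0 k + (1 - lam) * w1 k)"
    define G where "G = (\<lambda>u v. lam * hh u + (1 - lam) * hh v - hh (lam * u + (1 - lam) * v))"
    have wsp: "ws k > 0" if "k \<in> {1..K}" for k
      unfolding ws_def using w0_pos[OF that] w1_pos[OF that] lam by (intro add_pos_pos) auto
    have post_pos: "post_odds K \<alpha> P0 N0 N1 C0 C1 > 0"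
      and lnpost: "ln (post_odds K \<alpha> P0 N0 N1 C0 C1) = ln (P0 / (1 - P0)) + LB K \<alpha>
       + LB K (\<lambda>k. x k + y k + \<alpha> k) - LB K (\<lambda>k. x k + \<alpha> k) - LB K (\<lambda>k. y k + \<alpha> k)"
      subgoal by (rule ln_post(1)[OF K1 alpha_pos P0])
      subgoal unfolding x_def y_def by (rule ln_post(2)[OF K1 alpha_pos P0])
      done
    have au: "approx_odds K \<alpha> P0 w0 w1 N0 N1 C0 C1 = P0 / (1 - P0) * Qc powr e
         * (\<Prod>k\<in>{1..K}. p k powr (\<alpha> k + 1/2) * (p0 k / p k * (p1 k / p k)) powr (1/2 - \<alpha> k))
         * Nr powr e
         * (\<Prod>k\<in>{1..K}. (w0 k / ws k) powr (- Nr * lam * w0 k) * (w1 k / ws k) powr (- Nr * (1 - lam) * w1 k))"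
    proof -
      have Npos: "0 < N0 + N1" using n0p unfolding n0_def by simp
      show ?thesis
        unfolding p_def p0_def p1_def ws_def Qc_def e_def x_def y_def Nr_def n0_def n1_def
        by (rule approx_unfold[OF Npos ratio])
    qed
    have Qcp: "Qc > 0" unfolding Qc_def using lam by (simp add: pi_gt_zero)
    have appos: "p k > 0 \<and> p0 k / p k > 0 \<and> p1 k / p k > 0 \<and> w0 k > 0 \<and> w1 k > 0 \<and> ws k > 0"
      if "k \<in> {1..K}" for k
      using pr[OF that] p0r[OF that] w0_pos[OF that] w1_pos[OF that] wsp[OF that] dpos by auto
    note LA = ln_approx_gen[where p = p and ?r0.0 = "\<lambda>k. p0 k / p k" and ?r1.0 = "\<lambda>k. p1 k / p k"
        and ?w0.0 = w0 and ?w1.0 = w1 and ws = ws and \<alpha> = \<alpha> and e = e and ?E0.0 = "\<lambda>k. - Nr * lam * w0 k"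
        and ?E1.0 = "\<lambda>k. - Nr * (1 - lam) * w1 k" and Q = Qc and Nr = Nr and K = K and ?P0.0 = P0,
        OF P0 Qcp Nrp appos]
    have ap_pos: "approx_odds K \<alpha> P0 w0 w1 N0 N1 C0 C1 > 0" using LA(1) unfolding au .
    define Sc where "Sc = (\<Sum>k\<in>{1..K}. (\<alpha> k + 1/2) * ln (p k) + (1/2 - \<alpha> k) * (ln (p0 k / p k) + ln (p1 k / p k)))"
    define Sw where "Sw = (\<Sum>k\<in>{1..K}. (- Nr * lam * w0 k) * ln (w0 k / ws k) + (- Nr * (1 - lam) * w1 k) * ln (w1 k / ws k))"
    have lnap: "ln (approx_odds K \<alpha> P0 w0 w1 N0 N1 C0 C1) = ln (P0 / (1 - P0)) + e * ln Qc + Sc + e * ln Nr + Sw"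
      using LA(2) unfolding au Sc_def Sw_def .
    define Qn where "Qn = 1 + ln (Nr + A)"
    have NA: "Nr + A \<ge> 2" using Nr2 A0 by simp
    have Qn0: "Qn \<ge> 1" unfolding Qn_def using NA by simp
    have lnle: "1 + ln t \<le> Qn" if "0 < t" "t \<le> Nr + A" for t
      unfolding Qn_def using that by simp
    have sxy: "(\<Sum>k\<in>{1..K}. x k + y k + \<alpha> k) = Nr + A"
      unfolding A_def Nr_def sx[symmetric] sy[symmetric] by (simp add: sum.distrib)
    have sxa: "(\<Sum>k\<in>{1..K}. x k + \<alpha> k) = n0 + A"
      unfolding A_def sx[symmetric] by (simp add: sum.distrib)
    have sya: "(\<Sum>k\<in>{1..K}. y k + \<alpha> k) = n1 + A"
      unfolding A_def sy[symmetric] by (simp add: sum.distrib)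
    have apos: "\<alpha> k \<ge> 0" if "k \<in> {1..K}" for k using alpha_pos[OF that] by simp
    have e3: "\<bar>(\<Sum>k\<in>{1..K}. ln (Gamma (x k + y k + \<alpha> k))) - (\<Sum>k\<in>{1..K}. phi (x k + y k))\<bar>
        \<le> (\<Sum>k\<in>{1..K}. (2 + \<alpha> k) * Qn)"
    proof (rule sum_err)
      fix k assume k: "k \<in> {1..K}"
      have b: "\<bar>ln (Gamma (x k + y k + \<alpha> k)) - phi (x k + y k)\<bar> \<le> (2 + \<alpha> k) * (1 + ln (x k + y k + \<alpha> k))"
        using x2[OF k] apos[OF k] by (intro lnGamma_shift) auto
      have "1 + ln (x k + y k + \<alpha> k) \<le> Qn"
        using x2[OF k] apos[OF k] xle[OF k] aleA[OF k] by (intro lnle) (auto simp: Nr_def)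
      hence "(2 + \<alpha> k) * (1 + ln (x k + y k + \<alpha> k)) \<le> (2 + \<alpha> k) * Qn"
        using apos[OF k] by (intro mult_left_mono) auto
      thus "\<bar>ln (Gamma (x k + y k + \<alpha> k)) - phi (x k + y k)\<bar> \<le> (2 + \<alpha> k) * Qn" using b by linarith
    qed simp
    have e1: "\<bar>(\<Sum>k\<in>{1..K}. ln (Gamma (x k + \<alpha> k))) - (\<Sum>k\<in>{1..K}. phi (x k))\<bar>
        \<le> (\<Sum>k\<in>{1..K}. (2 + \<alpha> k) * Qn)"
    proof (rule sum_err)
      fix k assume k: "k \<in> {1..K}"
      have b: "\<bar>ln (Gamma (x k + \<alpha> k)) - phi (x k)\<bar> \<le> (2 + \<alpha> k) * (1 + ln (x k + \<alpha> k))"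
        using x2[OF k] apos[OF k] by (intro lnGamma_shift) auto
      have "1 + ln (x k + \<alpha> k) \<le> Qn"
        using x2[OF k] apos[OF k] xle[OF k] aleA[OF k] n1p by (intro lnle) (auto simp: Nr_def)
      hence "(2 + \<alpha> k) * (1 + ln (x k + \<alpha> k)) \<le> (2 + \<alpha> k) * Qn"
        using apos[OF k] by (intro mult_left_mono) auto
      thus "\<bar>ln (Gamma (x k + \<alpha> k)) - phi (x k)\<bar> \<le> (2 + \<alpha> k) * Qn" using b by linarith
    qed simp
    have e2: "\<bar>(\<Sum>k\<in>{1..K}. ln (Gamma (y k + \<alpha> k))) - (\<Sum>k\<in>{1..K}. phi (y k))\<bar>
        \<le> (\<Sum>k\<in>{1..K}. (2 + \<alpha> k) * Qn)"
    proof (rule sum_err)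
      fix k assume k: "k \<in> {1..K}"
      have b: "\<bar>ln (Gamma (y k + \<alpha> k)) - phi (y k)\<bar> \<le> (2 + \<alpha> k) * (1 + ln (y k + \<alpha> k))"
        using x2[OF k] apos[OF k] by (intro lnGamma_shift) auto
      have "1 + ln (y k + \<alpha> k) \<le> Qn"
        using x2[OF k] apos[OF k] xle[OF k] aleA[OF k] n0p by (intro lnle) (auto simp: Nr_def)
      hence "(2 + \<alpha> k) * (1 + ln (y k + \<alpha> k)) \<le> (2 + \<alpha> k) * Qn"
        using apos[OF k] by (intro mult_left_mono) auto
      thus "\<bar>ln (Gamma (y k + \<alpha> k)) - phi (y k)\<bar> \<le> (2 + \<alpha> k) * Qn" using b by linarith
    qed simp
    have s2: "(\<Sum>k\<in>{1..K}. (2 + \<alpha> k) * Qn) = (2 * real K + A) * Qn"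
      unfolding A_def by (simp add: sum_distrib_right[symmetric] sum.distrib)
    have g3: "\<bar>ln (Gamma (Nr + A)) - phi Nr\<bar> \<le> (2 + A) * Qn"
      using lnGamma_shift[of Nr A] Nr2 A0 unfolding Qn_def by simp
    have g1: "\<bar>ln (Gamma (n0 + A)) - phi n0\<bar> \<le> (2 + A) * Qn"
    proof -
      have "\<bar>ln (Gamma (n0 + A)) - phi n0\<bar> \<le> (2 + A) * (1 + ln (n0 + A))"
        using lnGamma_shift[of n0 A] n02 A0 by simp
      also have "\<dots> \<le> (2 + A) * Qn" using A0 n02 n1p by (intro mult_left_mono lnle) (auto simp: Nr_def)
      finally show ?thesis .
    qed
    have g2: "\<bar>ln (Gamma (n1 + A)) - phi n1\<bar> \<le> (2 + A) * Qn"
    proof -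
      have "\<bar>ln (Gamma (n1 + A)) - phi n1\<bar> \<le> (2 + A) * (1 + ln (n1 + A))"
        using lnGamma_shift[of n1 A] n12 A0 by simp
      also have "\<dots> \<le> (2 + A) * Qn" using A0 n12 n0p by (intro mult_left_mono lnle) (auto simp: Nr_def)
      finally show ?thesis .
    qed
    have phisum: "(\<Sum>k\<in>{1..K}. phi (z k)) = (\<Sum>k\<in>{1..K}. hh (z k)) - (\<Sum>k\<in>{1..K}. z k)" for z
      unfolding phi_def hh_def by (simp add: sum_subtractf)
    have phih: "phi t = hh t - t" for t unfolding phi_def hh_def by simp
    have sxy2: "(\<Sum>k\<in>{1..K}. x k + y k) = Nr" unfolding Nr_def sx[symmetric] sy[symmetric] by (simp add: sum.distrib)
    have hs3: "(\<Sum>k\<in>{1..K}. hh (x k + y k)) = hh Nr + Nr * (\<Sum>k\<in>{1..K}. hh (p k))"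
    proof -
      have "x k + y k > 0" if "k \<in> {1..K}" for k using x2[OF that] by simp
      thus ?thesis unfolding p_def using Nrp sxy2 by (intro h_split) auto
    qed
    have hs1: "(\<Sum>k\<in>{1..K}. hh (x k)) = hh n0 + n0 * (\<Sum>k\<in>{1..K}. hh (p0 k))"
    proof -
      have "x k > 0" if "k \<in> {1..K}" for k using x2[OF that] by simp
      thus ?thesis unfolding p0_def using n0p sx by (intro h_split) auto
    qed
    have hs2: "(\<Sum>k\<in>{1..K}. hh (y k)) = hh n1 + n1 * (\<Sum>k\<in>{1..K}. hh (p1 k))"
    proof -
      have "y k > 0" if "k \<in> {1..K}" for k using x2[OF that] by simp
      thus ?thesis unfolding p1_def using n1p sy by (intro h_split) auto
    qed
    have Gp: "(\<Sum>k\<in>{1..K}. G (p0 k) (p1 k)) = lam * (\<Sum>k\<in>{1..K}. hh (p0 k)) + (1 - lam) * (\<Sum>k\<in>{1..K}. hh (p1 k))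
        - (\<Sum>k\<in>{1..K}. hh (p k))"
      unfolding G_def pmix by (simp add: sum.distrib sum_subtractf sum_distrib_left)
    have a3: "(\<Sum>k\<in>{1..K}. phi (x k + y k)) - phi Nr = Nr * (\<Sum>k\<in>{1..K}. hh (p k))"
    proof -
      have "(\<Sum>k\<in>{1..K}. phi (x k + y k)) = (\<Sum>k\<in>{1..K}. hh (x k + y k)) - (\<Sum>k\<in>{1..K}. x k + y k)"
        by (rule phisum)
      thus ?thesis unfolding hs3 sxy2 phih by simp
    qed
    have a1: "(\<Sum>k\<in>{1..K}. phi (x k)) - phi n0 = n0 * (\<Sum>k\<in>{1..K}. hh (p0 k))"
    proof -
      have "(\<Sum>k\<in>{1..K}. phi (x k)) = (\<Sum>k\<in>{1..K}. hh (x k)) - (\<Sum>k\<in>{1..K}. x k)"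
        by (rule phisum)
      thus ?thesis unfolding hs1 sx phih by simp
    qed
    have a2: "(\<Sum>k\<in>{1..K}. phi (y k)) - phi n1 = n1 * (\<Sum>k\<in>{1..K}. hh (p1 k))"
    proof -
      have "(\<Sum>k\<in>{1..K}. phi (y k)) = (\<Sum>k\<in>{1..K}. hh (y k)) - (\<Sum>k\<in>{1..K}. y k)"
        by (rule phisum)
      thus ?thesis unfolding hs2 sy phih by simp
    qed
    have main: "((\<Sum>k\<in>{1..K}. phi (x k + y k)) - phi Nr) - ((\<Sum>k\<in>{1..K}. phi (x k)) - phi n0)
        - ((\<Sum>k\<in>{1..K}. phi (y k)) - phi n1) = - Nr * (\<Sum>k\<in>{1..K}. G (p0 k) (p1 k))"
      by (simp only: a1 a2 a3 Gp) (simp add: rat rat1 algebra_simps)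
    have LBdec: "\<bar>(LB K (\<lambda>k. x k + y k + \<alpha> k) - LB K (\<lambda>k. x k + \<alpha> k) - LB K (\<lambda>k. y k + \<alpha> k))
        - (- Nr * (\<Sum>k\<in>{1..K}. G (p0 k) (p1 k)))\<bar> \<le> B1 * Qn"
    proof -
      have eq: "LB K (\<lambda>k. x k + y k + \<alpha> k) - LB K (\<lambda>k. x k + \<alpha> k) - LB K (\<lambda>k. y k + \<alpha> k)
          = ((\<Sum>k\<in>{1..K}. ln (Gamma (x k + y k + \<alpha> k))) - ln (Gamma (Nr + A)))
          - ((\<Sum>k\<in>{1..K}. ln (Gamma (x k + \<alpha> k))) - ln (Gamma (n0 + A)))
          - ((\<Sum>k\<in>{1..K}. ln (Gamma (y k + \<alpha> k))) - ln (Gamma (n1 + A)))"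
        unfolding LB_def sxy sxa sya ..
      have B1e: "B1 * Qn = 3 * ((2 * real K + A) * Qn) + 3 * ((2 + A) * Qn)"
        unfolding B1_def by (simp add: algebra_simps)
      show ?thesis unfolding eq main[symmetric] B1e using e1 e2 e3 g1 g2 g3 unfolding s2 abs_le_iff
        by linarith
    qed
    have Sw_eq: "Sw = - Nr * (\<Sum>k\<in>{1..K}. G (w0 k) (w1 k))"
    proof -
      have "(- Nr * lam * w0 k) * ln (w0 k / ws k) + (- Nr * (1 - lam) * w1 k) * ln (w1 k / ws k)
          = - Nr * G (w0 k) (w1 k)" if k: "k \<in> {1..K}" for k
      proof -
        have l: "ln (w0 k / ws k) = ln (w0 k) - ln (ws k)" "ln (w1 k / ws k) = ln (w1 k) - ln (ws k)"
          using w0_pos[OF k] w1_pos[OF k] wsp[OF k] by (simp_all add: ln_divide_pos)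
        show ?thesis by (simp only: l) (simp add: G_def hh_def ws_def algebra_simps)
      qed
      thus ?thesis unfolding Sw_def by (simp add: sum_distrib_left)
    qed
    have Gd: "Nr * \<bar>G (p0 k) (p1 k) - G (w0 k) (w1 k)\<bar> \<le> 4 * Lc * T * sqrt Nr" if k: "k \<in> {1..K}" for k
    proof -
      have wr: "\<delta> \<le> w0 k" "w0 k \<le> 1" "\<delta> \<le> w1 k" "w1 k \<le> 1"
        using wd[OF k] w0le[OF k] w1le[OF k] dpos by auto
      have wsr: "\<delta> \<le> ws k \<and> ws k \<le> 1"
      proof -
        have "lam * \<delta> + (1 - lam) * \<delta> \<le> lam * w0 k + (1 - lam) * w1 k"
          using wr lam by (intro add_mono mult_left_mono) auto
        moreover have "lam * w0 k + (1 - lam) * w1 k \<le> lam * 1 + (1 - lam) * 1"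
          using wr lam by (intro add_mono mult_left_mono) auto
        ultimately show ?thesis unfolding ws_def by (simp add: algebra_simps)
      qed
      have h0: "\<bar>hh (p0 k) - hh (w0 k)\<bar> \<le> Lc * \<bar>p0 k - w0 k\<bar>"
        unfolding Lc_def using p0r[OF k] wr dpos by (intro h_lip) auto
      have h1: "\<bar>hh (p1 k) - hh (w1 k)\<bar> \<le> Lc * \<bar>p1 k - w1 k\<bar>"
        unfolding Lc_def using p0r[OF k] wr dpos by (intro h_lip) auto
      have h2: "\<bar>hh (p k) - hh (ws k)\<bar> \<le> Lc * \<bar>p k - ws k\<bar>"
        unfolding Lc_def using pr[OF k] wsr dpos by (intro h_lip) auto
      have pw: "\<bar>p k - ws k\<bar> \<le> lam * \<bar>p0 k - w0 k\<bar> + (1 - lam) * \<bar>p1 k - w1 k\<bar>"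
      proof -
        have "p k - ws k = lam * (p0 k - w0 k) + (1 - lam) * (p1 k - w1 k)"
          unfolding pmix ws_def by (simp add: algebra_simps)
        hence "\<bar>p k - ws k\<bar> \<le> \<bar>lam * (p0 k - w0 k)\<bar> + \<bar>(1 - lam) * (p1 k - w1 k)\<bar>" by simp
        thus ?thesis using lam by (simp add: abs_mult)
      qed
      have Geq: "G (p0 k) (p1 k) - G (w0 k) (w1 k) = lam * (hh (p0 k) - hh (w0 k)) + (1 - lam) * (hh (p1 k) - hh (w1 k))
          - (hh (p k) - hh (ws k))"
        unfolding G_def pmix ws_def by (simp add: algebra_simps)
      have "\<bar>G (p0 k) (p1 k) - G (w0 k) (w1 k)\<bar> \<le> lam * \<bar>hh (p0 k) - hh (w0 k)\<bar> + (1 - lam) * \<bar>hh (p1 k) - hh (w1 k)\<bar>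
          + \<bar>hh (p k) - hh (ws k)\<bar>"
      proof -
        have "\<bar>G (p0 k) (p1 k) - G (w0 k) (w1 k)\<bar> \<le> \<bar>lam * (hh (p0 k) - hh (w0 k))\<bar> + \<bar>(1 - lam) * (hh (p1 k) - hh (w1 k))\<bar>
          + \<bar>hh (p k) - hh (ws k)\<bar>" unfolding Geq by (rule tri3)
        thus ?thesis using lam by (simp add: abs_mult)
      qed
      also have "\<dots> \<le> lam * (Lc * \<bar>p0 k - w0 k\<bar>) + (1 - lam) * (Lc * \<bar>p1 k - w1 k\<bar>) + Lc * \<bar>p k - ws k\<bar>"
        using h0 h1 h2 lam by (intro add_mono mult_left_mono) auto
      also have "\<dots> \<le> lam * (Lc * \<bar>p0 k - w0 k\<bar>) + (1 - lam) * (Lc * \<bar>p1 k - w1 k\<bar>)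
           + Lc * (lam * \<bar>p0 k - w0 k\<bar> + (1 - lam) * \<bar>p1 k - w1 k\<bar>)"
        using pw Lc0 lam by (intro add_mono mult_left_mono) auto
      also have "\<dots> = 2 * Lc * (lam * \<bar>p0 k - w0 k\<bar> + (1 - lam) * \<bar>p1 k - w1 k\<bar>)" by (simp add: algebra_simps)
      finally have G1: "\<bar>G (p0 k) (p1 k) - G (w0 k) (w1 k)\<bar> \<le> 2 * Lc * (lam * \<bar>p0 k - w0 k\<bar> + (1 - lam) * \<bar>p1 k - w1 k\<bar>)" .
      have q0: "Nr * (lam * \<bar>p0 k - w0 k\<bar>) = \<bar>x k - n0 * w0 k\<bar>"
      proof -
        have "Nr * (lam * \<bar>p0 k - w0 k\<bar>) = n0 * \<bar>p0 k - w0 k\<bar>" unfolding rat by simp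
        also have "\<dots> = \<bar>n0 * (p0 k - w0 k)\<bar>" using n0p by (simp add: abs_mult)
        also have "n0 * (p0 k - w0 k) = x k - n0 * w0 k" unfolding p0_def using n0p by (simp add: algebra_simps)
        finally show ?thesis .
      qed
      have q1: "Nr * ((1 - lam) * \<bar>p1 k - w1 k\<bar>) = \<bar>y k - n1 * w1 k\<bar>"
      proof -
        have "Nr * ((1 - lam) * \<bar>p1 k - w1 k\<bar>) = n1 * \<bar>p1 k - w1 k\<bar>" unfolding rat1 by simp
        also have "\<dots> = \<bar>n1 * (p1 k - w1 k)\<bar>" using n1p by (simp add: abs_mult)
        also have "n1 * (p1 k - w1 k) = y k - n1 * w1 k" unfolding p1_def using n1p by (simp add: algebra_simps)
        finally show ?thesis .
      qed
      have sq: "sqrt n0 \<le> sqrt Nr" "sqrt n1 \<le> sqrt Nr" unfolding Nr_def using n0p n1p by auto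
      have "Nr * \<bar>G (p0 k) (p1 k) - G (w0 k) (w1 k)\<bar> \<le> Nr * (2 * Lc * (lam * \<bar>p0 k - w0 k\<bar> + (1 - lam) * \<bar>p1 k - w1 k\<bar>))"
        using G1 Nrp by (intro mult_left_mono) auto
      also have "\<dots> = 2 * Lc * (Nr * (lam * \<bar>p0 k - w0 k\<bar>) + Nr * ((1 - lam) * \<bar>p1 k - w1 k\<bar>))"
        by (simp add: algebra_simps)
      also have "\<dots> = 2 * Lc * (\<bar>x k - n0 * w0 k\<bar> + \<bar>y k - n1 * w1 k\<bar>)" unfolding q0 q1 ..
      also have "\<dots> \<le> 2 * Lc * (T * sqrt Nr + T * sqrt Nr)"
      proof -
        have "\<bar>x k - n0 * w0 k\<bar> \<le> T * sqrt Nr" using devx(1)[OF k] sq T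
          by (meson mult_left_mono order_trans)
        moreover have "\<bar>y k - n1 * w1 k\<bar> \<le> T * sqrt Nr" using devx(2)[OF k] sq T
          by (meson mult_left_mono order_trans)
        ultimately show ?thesis using Lc0 by (intro mult_left_mono add_mono) auto
      qed
      also have "\<dots> = 4 * Lc * T * sqrt Nr" by simp
      finally show ?thesis .
    qed
    have Lip: "Nr * \<bar>(\<Sum>k\<in>{1..K}. G (p0 k) (p1 k)) - (\<Sum>k\<in>{1..K}. G (w0 k) (w1 k))\<bar> \<le> B2 * sqrt Nr"
    proof -
      have "Nr * \<bar>(\<Sum>k\<in>{1..K}. G (p0 k) (p1 k)) - (\<Sum>k\<in>{1..K}. G (w0 k) (w1 k))\<bar>
          = \<bar>\<Sum>k\<in>{1..K}. Nr * (G (p0 k) (p1 k) - G (w0 k) (w1 k))\<bar>"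
      proof -
        have "(\<Sum>k\<in>{1..K}. Nr * (G (p0 k) (p1 k) - G (w0 k) (w1 k)))
            = Nr * ((\<Sum>k\<in>{1..K}. G (p0 k) (p1 k)) - (\<Sum>k\<in>{1..K}. G (w0 k) (w1 k)))"
          by (simp only: sum_distrib_left[symmetric] sum_subtractf)
        thus ?thesis using Nrp by (simp add: abs_mult)
      qed
      also have "\<dots> \<le> (\<Sum>k\<in>{1..K}. \<bar>Nr * (G (p0 k) (p1 k) - G (w0 k) (w1 k))\<bar>)" by (rule sum_abs)
      also have "\<dots> \<le> (\<Sum>k\<in>{1..K}. 4 * Lc * T * sqrt Nr)"
        using Gd Nrp by (intro sum_mono) (simp add: abs_mult)
      also have "\<dots> = B2 * sqrt Nr" unfolding B2_def by simp
      finally show ?thesis .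
    qed
    have Scb: "\<bar>Sc\<bar> \<le> Cc2"
    proof -
      have lb: "\<bar>ln t\<bar> \<le> - ln \<delta>" "ln t \<le> 0" "ln \<delta> \<le> ln t" if "\<delta> \<le> t" "t \<le> 1" for t
        using that dpos by auto
      have "\<bar>(\<alpha> k + 1/2) * ln (p k) + (1/2 - \<alpha> k) * (ln (p0 k / p k) + ln (p1 k / p k))\<bar>
          \<le> 3 * (- ln \<delta>) * (\<alpha> k + 1/2)" if k: "k \<in> {1..K}" for k
      proof -
        have pp: "p k > 0" "p0 k > 0" "p1 k > 0" using pr[OF k] p0r[OF k] dpos by auto
        have l: "ln (p0 k / p k) = ln (p0 k) - ln (p k)" "ln (p1 k / p k) = ln (p1 k) - ln (p k)"
          using pp by (simp_all add: ln_divide_pos)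
        have b0: "\<bar>ln (p0 k) - ln (p k)\<bar> \<le> - ln \<delta>" "\<bar>ln (p1 k) - ln (p k)\<bar> \<le> - ln \<delta>"
          using lb[of "p k"] lb[of "p0 k"] lb[of "p1 k"] pr[OF k] p0r[OF k] by (auto simp: abs_le_iff)
        have bp: "\<bar>ln (p k)\<bar> \<le> - ln \<delta>" using lb pr[OF k] by auto
        have a: "\<alpha> k \<ge> 0" using apos[OF k] .
        have "\<bar>(\<alpha> k + 1/2) * ln (p k) + (1/2 - \<alpha> k) * (ln (p0 k / p k) + ln (p1 k / p k))\<bar>
            \<le> (\<alpha> k + 1/2) * \<bar>ln (p k)\<bar> + \<bar>1/2 - \<alpha> k\<bar> * (\<bar>ln (p0 k) - ln (p k)\<bar> + \<bar>ln (p1 k) - ln (p k)\<bar>)"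
        proof -
          have "\<bar>(\<alpha> k + 1/2) * ln (p k) + (1/2 - \<alpha> k) * ((ln (p0 k) - ln (p k)) + (ln (p1 k) - ln (p k)))\<bar>
              \<le> \<bar>(\<alpha> k + 1/2) * ln (p k)\<bar> + \<bar>(1/2 - \<alpha> k) * ((ln (p0 k) - ln (p k)) + (ln (p1 k) - ln (p k)))\<bar>"
            by (rule abs_triangle_ineq)
          also have "\<dots> = (\<alpha> k + 1/2) * \<bar>ln (p k)\<bar> + \<bar>1/2 - \<alpha> k\<bar> * \<bar>(ln (p0 k) - ln (p k)) + (ln (p1 k) - ln (p k))\<bar>"
            using a by (simp add: abs_mult)
          also have "\<dots> \<le> (\<alpha> k + 1/2) * \<bar>ln (p k)\<bar> + \<bar>1/2 - \<alpha> k\<bar> * (\<bar>ln (p0 k) - ln (p k)\<bar> + \<bar>ln (p1 k) - ln (p k)\<bar>)"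
            by (intro add_left_mono mult_left_mono abs_triangle_ineq) auto
          finally show ?thesis unfolding l .
        qed
        also have "\<dots> \<le> (\<alpha> k + 1/2) * (- ln \<delta>) + (\<alpha> k + 1/2) * ((- ln \<delta>) + (- ln \<delta>))"
        proof -
          have "\<bar>1/2 - \<alpha> k\<bar> \<le> \<alpha> k + 1/2" using a by simp
          thus ?thesis using a b0 bp lnd by (intro add_mono mult_mono) auto
        qed
        also have "\<dots> = 3 * (- ln \<delta>) * (\<alpha> k + 1/2)" by (simp add: algebra_simps)
        finally show ?thesis .
      qed
      hence "\<bar>Sc\<bar> \<le> (\<Sum>k\<in>{1..K}. 3 * (- ln \<delta>) * (\<alpha> k + 1/2))"
        unfolding Sc_def by (intro order_trans[OF sum_abs] sum_mono) auto
      also have "\<dots> = 3 * (- ln \<delta>) * (\<Sum>k\<in>{1..K}. \<alpha> k + 1/2)" by (rule sum_distrib_left[symmetric])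
      also have "(\<Sum>k\<in>{1..K}. \<alpha> k + 1/2) = A + real K / 2" unfolding A_def by (simp add: sum.distrib)
      also have "3 * (- ln \<delta>) * (A + real K / 2) = Cc2" unfolding Cc2_def ..
      finally show ?thesis .
    qed
    have e0: "e \<ge> 0" "e \<le> real K" unfolding e_def using K by auto
    have "1 + ln Nr \<le> Qn" using A0 Nrp by (intro lnle) auto
    hence lnNr: "ln Nr \<ge> 0" "ln Nr \<le> Qn" using Nr1 by auto
    have eNr: "e * ln Nr \<le> real K * Qn" using e0 lnNr by (intro mult_mono) auto
    have eNr0: "e * ln Nr \<ge> 0" using e0 lnNr by simp
    have QnB: "Qn \<le> (3 + 2 * sqrt A) * sqrt Nr"
    proof -
      have "ln (Nr + A) \<le> 2 * sqrt (Nr + A)" using NA by (intro ln_le_2sqrt) auto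
      also have "sqrt (Nr + A) \<le> sqrt Nr + sqrt A" using Nrp A0 by (intro sqrt_add_le) auto
      finally have l: "ln (Nr + A) \<le> 2 * (sqrt Nr + sqrt A)" by simp
      have "sqrt A * 1 \<le> sqrt A * sqrt Nr" using sqNr A0 by (intro mult_left_mono) auto
      hence "Qn \<le> 1 + 2 * sqrt Nr + 2 * (sqrt A * sqrt Nr)" unfolding Qn_def using l by simp
      also have "\<dots> \<le> sqrt Nr + 2 * sqrt Nr + 2 * (sqrt A * sqrt Nr)" using sqNr by linarith
      also have "\<dots> = (3 + 2 * sqrt A) * sqrt Nr" by (simp add: algebra_simps)
      finally show ?thesis .
    qed
    have B10: "B1 + real K \<ge> 0" unfolding B1_def using A0 by simp
    have QnB2: "(B1 + real K) * Qn \<le> (B1 + real K) * ((3 + 2 * sqrt A) * sqrt Nr)"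
      using B10 QnB by (intro mult_left_mono) auto
    have Cs: "CB \<le> CB * sqrt Nr" "Cc1 \<le> Cc1 * sqrt Nr" "Cc2 \<le> Cc2 * sqrt Nr"
    proof -
      have "A + real K / 2 \<ge> 0" using A0 by simp
      hence "Cc2 \<ge> 0" unfolding Cc2_def using lnd by (intro mult_nonneg_nonneg) auto
      moreover have "CB \<ge> 0" "Cc1 \<ge> 0" unfolding CB_def Cc1_def by auto
      ultimately have "CB \<ge> 0" "Cc1 \<ge> 0" "Cc2 \<ge> 0" by auto
      thus "CB \<le> CB * sqrt Nr" "Cc1 \<le> Cc1 * sqrt Nr" "Cc2 \<le> Cc2 * sqrt Nr"
        using sqNr by (simp_all add: mult_le_cancel_left1 mult_left_mono[of 1 "sqrt Nr", simplified])
    qed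
    have Mexp: "M * sqrt Nr = CB * sqrt Nr + Cc1 * sqrt Nr + Cc2 * sqrt Nr
        + (B1 + real K) * ((3 + 2 * sqrt A) * sqrt Nr) + B2 * sqrt Nr"
      unfolding M_def by (simp add: algebra_simps)
    define GP where "GP = (\<Sum>k\<in>{1..K}. G (p0 k) (p1 k))"
    define GW where "GW = (\<Sum>k\<in>{1..K}. G (w0 k) (w1 k))"
    define L3 where "L3 = LB K (\<lambda>k. x k + y k + \<alpha> k) - LB K (\<lambda>k. x k + \<alpha> k) - LB K (\<lambda>k. y k + \<alpha> k)"
    have LBd: "\<bar>L3 - (- Nr * GP)\<bar> \<le> B1 * Qn" using LBdec unfolding L3_def GP_def .
    have Lip': "\<bar>Nr * GP - Nr * GW\<bar> \<le> B2 * sqrt Nr"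
      using Lip Nrp unfolding GP_def GW_def by (simp add: abs_mult right_diff_distrib[symmetric])
    have diff: "ln (post_odds K \<alpha> P0 N0 N1 C0 C1) - ln (approx_odds K \<alpha> P0 w0 w1 N0 N1 C0 C1)
        = LB K \<alpha> + L3 - e * ln Qc - Sc - e * ln Nr + Nr * GW"
      unfolding lnpost lnap Sw_eq L3_def GW_def by (simp add: algebra_simps)
    have CBb: "\<bar>LB K \<alpha>\<bar> \<le> CB" "\<bar>e * ln Qc\<bar> \<le> Cc1" unfolding CB_def Cc1_def by auto
    have bound: "\<bar>ln (post_odds K \<alpha> P0 N0 N1 C0 C1) - ln (approx_odds K \<alpha> P0 w0 w1 N0 N1 C0 C1)\<bar> \<le> M * sqrt Nr"
      unfolding diff Mexp using LBd Lip' CBb Scb eNr eNr0 QnB2 Cs unfolding abs_le_iff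
      by (simp add: algebra_simps)
    have "ln (post_odds K \<alpha> P0 N0 N1 C0 C1 / approx_odds K \<alpha> P0 w0 w1 N0 N1 C0 C1)
        = ln (post_odds K \<alpha> P0 N0 N1 C0 C1) - ln (approx_odds K \<alpha> P0 w0 w1 N0 N1 C0 C1)"
      using post_pos ap_pos by (rule ln_divide_pos)
    thus ?thesis using bound ap_pos unfolding NrN by simp
    qed
  qed
  thus ?thesis by blast
qed


lemma cnt_sum:
  assumes "\<forall>j<N. C j \<in> {1..K}"
  shows "(\<Sum>k\<in>{1..K}. cnt N C k) = N"
proof -
  have "(\<Sum>k\<in>{1..K}. cnt N C k) = card (\<Union>k\<in>{1..K}. {j \<in> {0..<N}. C j = k})"
    unfolding cnt_def by (rule card_UN_disjoint[symmetric]) auto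
  also have "(\<Union>k\<in>{1..K}. {j \<in> {0..<N}. C j = k}) = {0..<N}" using assms by auto
  finally show ?thesis by simp
qed

lemma support_H1:
  assumes w0: "\<And>k. k \<in> {1..K} \<Longrightarrow> w0 k > 0" "(\<Sum>k\<in>{1..K}. w0 k) = 1"
    and w1: "\<And>k. k \<in> {1..K} \<Longrightarrow> w1 k > 0" "(\<Sum>k\<in>{1..K}. w1 k) = 1"
  shows "measure_pmf.prob (sample_H1 K N0 N1 w0 w1)
     {(C0, C1). \<not> ((\<forall>j<N0. C0 j \<in> {1..K}) \<and> (\<forall>j<N1. C1 j \<in> {1..K}))} = 0"
proof -
  have s0: "set_pmf (cat_pmf K w0) \<subseteq> {1..K}" by (rule set_cat[OF w0])
  have s1: "set_pmf (cat_pmf K w1) \<subseteq> {1..K}" by (rule set_cat[OF w1])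
  have "set_pmf (sample_H1 K N0 N1 w0 w1) \<inter>
     {(C0, C1). \<not> ((\<forall>j<N0. C0 j \<in> {1..K}) \<and> (\<forall>j<N1. C1 j \<in> {1..K}))} = {}"
    unfolding sample_H1_def set_pair_pmf using s0 s1
    by (auto simp: set_Pi_pmf PiE_dflt_def)
  thus ?thesis by (subst measure_pmf_zero_iff) auto
qed

theorem corollary2:
  fixes K :: nat and \<alpha> w0 w1 :: "nat \<Rightarrow> real" and P0 lam0 :: real
    and N0 N1 :: "nat \<Rightarrow> nat"
  assumes K: "K \<ge> 2"
    and alpha_pos: "\<And>k. k \<in> {1..K} \<Longrightarrow> \<alpha> k > 0"
    and P0: "0 < P0" "P0 < 1"
    and lam: "0 < lam0" "lam0 < 1"
    and w0_pos: "\<And>k. k \<in> {1..K} \<Longrightarrow> w0 k > 0"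
    and w1_pos: "\<And>k. k \<in> {1..K} \<Longrightarrow> w1 k > 0"
    and w0_sum: "(\<Sum>k\<in>{1..K}. w0 k) = 1"
    and w1_sum: "(\<Sum>k\<in>{1..K}. w1 k) = 1"
    and neq: "\<exists>k\<in>{1..K}. w0 k \<noteq> w1 k"
    and N0_lim: "filterlim N0 at_top sequentially"
    and N1_lim: "filterlim N1 at_top sequentially"
    and ratio: "\<And>n. real (N0 n) = lam0 * real (N0 n + N1 n)"
  shows "\<forall>\<epsilon>>0. \<exists>M. \<forall>\<^sub>F n in sequentially.
           measure_pmf.prob (sample_H1 K (N0 n) (N1 n) w0 w1)
             {(C0, C1). \<not> (approx_odds K \<alpha> P0 w0 w1 (N0 n) (N1 n) C0 C1 > 0 \<and>
                 \<bar>ln (post_odds K \<alpha> P0 (N0 n) (N1 n) C0 C1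
                       / approx_odds K \<alpha> P0 w0 w1 (N0 n) (N1 n) C0 C1)\<bar>
                   \<le> M * sqrt (real (N0 n + N1 n)))} < \<epsilon>"
proof (intro allI impI)
  fix \<epsilon> :: real assume eps: "\<epsilon> > 0"
  define T where "T = sqrt (4 * real K / \<epsilon>)"
  have T2': "4 * real K / \<epsilon> \<ge> 0" using eps by (intro divide_nonneg_pos) auto
  have T0: "T \<ge> 0" unfolding T_def using T2' by simp
  have T2: "T\<^sup>2 = 4 * real K / \<epsilon>" unfolding T_def using T2' by simp
  have Kp: "real K > 0" using K by simp
  have ex: "exp (- 2 * T\<^sup>2) \<le> 1 / (2 * T\<^sup>2)"
  proof -
    have tp: "2 * T\<^sup>2 > 0" unfolding T2 using eps Kp by simp
    have "1 + 2 * T\<^sup>2 \<le> exp (2 * T\<^sup>2)" by (rule exp_ge_add_one_self)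
    hence "2 * T\<^sup>2 \<le> exp (2 * T\<^sup>2)" by linarith
    hence "1 / exp (2 * T\<^sup>2) \<le> 1 / (2 * T\<^sup>2)" using tp by (intro divide_left_mono) auto
    thus ?thesis by (simp add: exp_minus field_simps)
  qed
  have small: "4 * real K * exp (- 2 * T\<^sup>2) < \<epsilon>"
  proof -
    have "4 * real K * exp (- 2 * T\<^sup>2) \<le> 4 * real K * (1 / (2 * T\<^sup>2))"
      using ex Kp by (intro mult_left_mono) auto
    also have "\<dots> = \<epsilon> / 2" unfolding T2 using eps Kp by (simp add: field_simps)
    finally show ?thesis using eps by simp
  qed
  obtain M X where MX: "\<forall>N0 N1 C0 C1. real N0 \<ge> X \<longrightarrow> real N1 \<ge> X \<longrightarrow> real N0 = lam0 * real (N0 + N1)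
      \<longrightarrow> (\<Sum>k\<in>{1..K}. cnt N0 C0 k) = N0 \<longrightarrow> (\<Sum>k\<in>{1..K}. cnt N1 C1 k) = N1
      \<longrightarrow> (\<forall>k\<in>{1..K}. \<bar>real (cnt N0 C0 k) - real N0 * w0 k\<bar> \<le> T * sqrt (real N0)
              \<and> \<bar>real (cnt N1 C1 k) - real N1 * w1 k\<bar> \<le> T * sqrt (real N1))
      \<longrightarrow> approx_odds K \<alpha> P0 w0 w1 N0 N1 C0 C1 > 0 \<and>
          \<bar>ln (post_odds K \<alpha> P0 N0 N1 C0 C1 / approx_odds K \<alpha> P0 w0 w1 N0 N1 C0 C1)\<bar>
            \<le> M * sqrt (real (N0 + N1))"
    by (rule det[of K \<alpha> P0 lam0 w0 w1 T, elim_format])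
       (use K alpha_pos P0 lam w0_pos w1_pos w0_sum w1_sum T0 in \<open>auto\<close>)
  define c where "c = nat \<lceil>X\<rceil> + 1"
  have ev0: "\<forall>\<^sub>F n in sequentially. c \<le> N0 n" using N0_lim by (simp add: filterlim_at_top)
  have ev1: "\<forall>\<^sub>F n in sequentially. c \<le> N1 n" using N1_lim by (simp add: filterlim_at_top)
  show "\<exists>M. \<forall>\<^sub>F n in sequentially.
           measure_pmf.prob (sample_H1 K (N0 n) (N1 n) w0 w1)
             {(C0, C1). \<not> (approx_odds K \<alpha> P0 w0 w1 (N0 n) (N1 n) C0 C1 > 0 \<and>
                 \<bar>ln (post_odds K \<alpha> P0 (N0 n) (N1 n) C0 C1
                       / approx_odds K \<alpha> P0 w0 w1 (N0 n) (N1 n) C0 C1)\<bar>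
                   \<le> M * sqrt (real (N0 n + N1 n)))} < \<epsilon>"
  proof (intro exI[of _ M])
    show "\<forall>\<^sub>F n in sequentially.
           measure_pmf.prob (sample_H1 K (N0 n) (N1 n) w0 w1)
             {(C0, C1). \<not> (approx_odds K \<alpha> P0 w0 w1 (N0 n) (N1 n) C0 C1 > 0 \<and>
                 \<bar>ln (post_odds K \<alpha> P0 (N0 n) (N1 n) C0 C1
                       / approx_odds K \<alpha> P0 w0 w1 (N0 n) (N1 n) C0 C1)\<bar>
                   \<le> M * sqrt (real (N0 n + N1 n)))} < \<epsilon>"
      using ev0 ev1
    proof eventually_elim
      case (elim n)
      define a where "a = N0 n"
      define b where "b = N1 n"
      have aX: "real a \<ge> X" and bX: "real b \<ge> X" and ap: "a > 0" and bp: "b > 0"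
        using elim unfolding a_def b_def c_def by linarith+
      define P where "P = sample_H1 K a b w0 w1"
      define D0 where "D0 = (\<lambda>k. {CC :: (nat \<Rightarrow> nat) \<times> (nat \<Rightarrow> nat). T * sqrt (real a) \<le> \<bar>real (cnt a (fst CC) k) - real a * w0 k\<bar>})"
      define D1 where "D1 = (\<lambda>k. {CC :: (nat \<Rightarrow> nat) \<times> (nat \<Rightarrow> nat). T * sqrt (real b) \<le> \<bar>real (cnt b (snd CC) k) - real b * w1 k\<bar>})"
      define Z where "Z = {(C0, C1). \<not> ((\<forall>j<a. C0 j \<in> {1..K}) \<and> (\<forall>j<b. C1 j \<in> {1..K}))}"
      define Bad where "Bad = {(C0, C1). \<not> (approx_odds K \<alpha> P0 w0 w1 a b C0 C1 > 0 \<and>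
                 \<bar>ln (post_odds K \<alpha> P0 a b C0 C1 / approx_odds K \<alpha> P0 w0 w1 a b C0 C1)\<bar>
                   \<le> M * sqrt (real (a + b)))}"
      have sub: "Bad \<subseteq> (\<Union>k\<in>{1..K}. D0 k) \<union> (\<Union>k\<in>{1..K}. D1 k) \<union> Z"
      proof
        fix CC assume CC: "CC \<in> Bad"
        obtain C0 C1 where CCe: "CC = (C0, C1)" by (cases CC)
        show "CC \<in> (\<Union>k\<in>{1..K}. D0 k) \<union> (\<Union>k\<in>{1..K}. D1 k) \<union> Z"
        proof (rule ccontr)
          assume nin: "CC \<notin> (\<Union>k\<in>{1..K}. D0 k) \<union> (\<Union>k\<in>{1..K}. D1 k) \<union> Z"
          hence sup: "\<forall>j<a. C0 j \<in> {1..K}" "\<forall>j<b. C1 j \<in> {1..K}" unfolding Z_def CCe by auto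
          have devs: "\<forall>k\<in>{1..K}. \<bar>real (cnt a C0 k) - real a * w0 k\<bar> \<le> T * sqrt (real a)
              \<and> \<bar>real (cnt b C1 k) - real b * w1 k\<bar> \<le> T * sqrt (real b)"
            using nin unfolding D0_def D1_def CCe by auto
          have "approx_odds K \<alpha> P0 w0 w1 a b C0 C1 > 0 \<and>
              \<bar>ln (post_odds K \<alpha> P0 a b C0 C1 / approx_odds K \<alpha> P0 w0 w1 a b C0 C1)\<bar> \<le> M * sqrt (real (a + b))"
            using MX aX bX ratio[of n] cnt_sum[OF sup(1)] cnt_sum[OF sup(2)] devs unfolding a_def b_def
            by blast
          thus False using CC unfolding Bad_def CCe by simp
        qed
      qed
      have pD0: "measure_pmf.prob P (D0 k) \<le> 2 * exp (- 2 * T\<^sup>2)" if k: "k \<in> {1..K}" for k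
      proof -
        have "measure_pmf.prob P (D0 k) = measure_pmf.prob (Pi_pmf {0..<a} 0 (\<lambda>_. cat_pmf K w0))
            {C. T * sqrt (real a) \<le> \<bar>real (cnt a C k) - real a * w0 k\<bar>}"
          unfolding P_def D0_def sample_H1_def by (rule pair_fst_prob)
        also have "\<dots> \<le> 2 * exp (- 2 * T\<^sup>2)" using w0_pos w0_sum k ap T0 by (rule dev_bound)
        finally show ?thesis .
      qed
      have pD1: "measure_pmf.prob P (D1 k) \<le> 2 * exp (- 2 * T\<^sup>2)" if k: "k \<in> {1..K}" for k
      proof -
        have "measure_pmf.prob P (D1 k) = measure_pmf.prob (Pi_pmf {0..<b} 0 (\<lambda>_. cat_pmf K w1))
            {C. T * sqrt (real b) \<le> \<bar>real (cnt b C k) - real b * w1 k\<bar>}"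
          unfolding P_def D1_def sample_H1_def by (rule pair_snd_prob)
        also have "\<dots> \<le> 2 * exp (- 2 * T\<^sup>2)" using w1_pos w1_sum k bp T0 by (rule dev_bound)
        finally show ?thesis .
      qed
      have pZ: "measure_pmf.prob P Z = 0" unfolding P_def Z_def
        by (rule support_H1[OF w0_pos w0_sum w1_pos w1_sum])
      have "measure_pmf.prob P Bad \<le> measure_pmf.prob P ((\<Union>k\<in>{1..K}. D0 k) \<union> (\<Union>k\<in>{1..K}. D1 k) \<union> Z)"
        using sub by (intro measure_pmf.finite_measure_mono) auto
      also have "\<dots> \<le> measure_pmf.prob P ((\<Union>k\<in>{1..K}. D0 k) \<union> (\<Union>k\<in>{1..K}. D1 k)) + measure_pmf.prob P Z"
        by (intro measure_subadditive) (auto simp: measure_pmf.emeasure_finite)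
      also have "measure_pmf.prob P ((\<Union>k\<in>{1..K}. D0 k) \<union> (\<Union>k\<in>{1..K}. D1 k))
          \<le> measure_pmf.prob P (\<Union>k\<in>{1..K}. D0 k) + measure_pmf.prob P (\<Union>k\<in>{1..K}. D1 k)"
        by (intro measure_subadditive) (auto simp: measure_pmf.emeasure_finite)
      also have "measure_pmf.prob P (\<Union>k\<in>{1..K}. D0 k) \<le> (\<Sum>k\<in>{1..K}. measure_pmf.prob P (D0 k))"
        by (intro measure_pmf.finite_measure_subadditive_finite) auto
      also have "\<dots> \<le> (\<Sum>k\<in>{1..K}. 2 * exp (- 2 * T\<^sup>2))" using pD0 by (intro sum_mono) auto
      also have "measure_pmf.prob P (\<Union>k\<in>{1..K}. D1 k) \<le> (\<Sum>k\<in>{1..K}. measure_pmf.prob P (D1 k))"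
        by (intro measure_pmf.finite_measure_subadditive_finite) auto
      also have "\<dots> \<le> (\<Sum>k\<in>{1..K}. 2 * exp (- 2 * T\<^sup>2))" using pD1 by (intro sum_mono) auto
      finally have "measure_pmf.prob P Bad \<le> 4 * real K * exp (- 2 * T\<^sup>2)" using pZ by simp
      hence "measure_pmf.prob P Bad < \<epsilon>" using small by linarith
      thus ?case unfolding P_def Bad_def a_def b_def .
    qed
  qed
qed

end
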